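(* Let $d\ge 2$ and let $s$ be a zero-mean complex random variable and ${\bf z}$ a zero-mean complex random vector of dimension $d-1$, with $s$ and ${\bf z}$ mutually independent, both circular (i.e. ${\rm E}[s^2]=0$ and ${\rm E}[{\bf z}{\bf z}^T]={\bf 0}$), with densities $p_s$, $p_{\bf z}$ satisfying the standard regularity conditions (smooth, all expectations below finite, boundary terms in integration by parts vanish). Consider $N$ i.i.d. observations of ${\bf x}={\bf A}{\bf v}$, ${\bf v}=[s;{\bf z}]$, where $$ {\bf A}=\begin{pmatrix}1 & {\bf h}^H\\ {\bf g} & {\bf g}{\bf h}^H-{\bf I}_{d-1}\end{pmatrix},\qquad {\bf A}^{-1}=\begin{pmatrix}{\bf w}^H\\ {\bf B}\end{pmatrix}=\begin{pmatrix}1-{\bf h}^H{\bf g} & {\bf h}^H\\ {\bf g} & -{\bf I}_{d-1}\end{pmatrix}, $$ with unknown parameters ${\bf h},{\bf g}\in\mathbb{C}^{d-1}$, so that the per-sample log-likelihood is $\mathcal{L}({\bf h},{\bf g}|{\bf x})=\log p_s({\bf w}^H{\bf x})+\log p_{\bf z}({\bf B}{\bf x})$. Let the true parameter value satisfy ${\bf h}={\bf 0}$ (with ${\bf g}$ arbitrary) and assume the complex Fisher information matrix of $({\bf h},{\bf g})$ is nonsingular. Then the Cramér–Rao lower bound for ${\bf h}$ (the block of the inverse Fisher information matrix of the $N$ samples corresponding to ${\bf h}$) equals $$ \mathtt{CRLB}({\bf h})=\frac{1}{N}\left(\kappa_s{\bf C}_{\bf z}-\frac{1}{\sigma_s^2}\boldsymbol{\kappa}_{\bf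 z}^{-1}\right)^{-1}, $$ and the Cramér–Rao-induced bound on the interference-to-signal ratio satisfies $$ \frac{1}{\sigma_s^2}\,\mathrm{tr}\bigl({\bf C}_{\bf z}\,\mathtt{CRLB}({\bf h})\bigr)=\frac{1}{N}\sum_{j=2}^{d}\frac{\omega_j}{\sigma_s^2\kappa_s\omega_j-1}, $$ where $\omega_2,\dots,\omega_d$ are the eigenvalues of the positive definite matrix ${\bf C}_{\bf z}^{1/2}\boldsymbol{\kappa}_{\bf z}{\bf C}_{\bf z}^{1/2}$.
   Context: Derivatives are Wirtinger derivatives. Score functions: $\psi_s(s)=-\partial \ln p_s(s,s^* )/\partial s^*$ and $\boldsymbol{\psi}_{\bf z}({\bf z})=-\partial \ln p_{\bf z}({\bf z},{\bf z}^* )/\partial {\bf z}^*$. Notation: $\kappa_s={\rm E}[|\psi_s(s)|^2]$, $\sigma_s^2={\rm E}[|s|^2]$, $\boldsymbol{\kappa}_{\bf z}={\rm E}[\boldsymbol{\psi}_{\bf z}({\bf z})\boldsymbol{\psi}_{\bf z}({\bf z})^H]$, ${\bf C}_{\bf z}={\rm E}[{\bf z}{\bf z}^H]$ (assumed nonsingular), ${\bf C}_{\bf z}^{1/2}$ its Hermitian positive definite square root. For complex parameter vector $\boldsymbol\theta$, the (per-sample) Fisher information matrix is $\mathcal{J}=\begin{pmatrix}{\bf F}&{\bf P}\\{\bf P}^*&{\bf F}^*\end{pmatrix}$ with ${\bf F}={\rm E}[\frac{\partial\mathcal{L}}{\partial\boldsymbol\theta^*}(\frac{\partial\mathcal{L}}{\partial\boldsymbol\theta^*})^H]$,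 ${\bf P}={\rm E}[\frac{\partial\mathcal{L}}{\partial\boldsymbol\theta^*}(\frac{\partial\mathcal{L}}{\partial\boldsymbol\theta^*})^T]$; for $N$ i.i.d. samples it is $N\mathcal{J}$, and the CRLB is its inverse. *)

theory Defs
  imports "HOL-Analysis.Analysis" "HOL-Computational_Algebra.Polynomial"
begin

text \<open>Conjugate Wirtinger derivative d f / d s* = (df/dx + i df/dy)/2 of a
  function of one complex variable (complex-valued; real functions via of_real).\<close>
definition cwirt :: "(complex \<Rightarrow> complex) \<Rightarrow> complex \<Rightarrow> complex" where
  "cwirt f s = (frechet_derivative f (at s) 1 + \<i> * frechet_derivative f (at s) \<i>) / 2"

definition vwirt :: "(complex^'m \<Rightarrow> complex) \<Rightarrow> complex^'m \<Rightarrow> complex^'m" where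
  "vwirt f t = (\<chi> k. (frechet_derivative f (at t) (axis k 1)
                     + \<i> * frechet_derivative f (at t) (axis k \<i>)) / 2)"

definition score_s :: "(complex \<Rightarrow> real) \<Rightarrow> complex \<Rightarrow> complex" where
  "score_s p s = - cwirt (\<lambda>t. complex_of_real (ln (p t))) s"

definition score_z :: "(complex^'m \<Rightarrow> real) \<Rightarrow> complex^'m \<Rightarrow> complex^'m" where
  "score_z p z = - vwirt (\<lambda>t. complex_of_real (ln (p t))) z"

definition kappa_s :: "(complex \<Rightarrow> real) \<Rightarrow> real" where
  "kappa_s p = integral\<^sup>L lborel (\<lambda>s. p s * (cmod (score_s p s))\<^sup>2)"

definition sigma2_s :: "(complex \<Rightarrow> real) \<Rightarrow> real" where
  "sigma2_s p = integral\<^sup>L lborel (\<lambda>s. p s * (cmod s)\<^sup>2)"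

definition kappa_z :: "(complex^'m \<Rightarrow> real) \<Rightarrow> complex^'m^'m" where
  "kappa_z p = (\<chi> i j. integral\<^sup>L lborel
      (\<lambda>z. complex_of_real (p z) * (score_z p z $ i * cnj (score_z p z $ j))))"

definition cov_z :: "(complex^'m \<Rightarrow> real) \<Rightarrow> complex^'m^'m" where
  "cov_z p = (\<chi> i j. integral\<^sup>L lborel (\<lambda>z. complex_of_real (p z) * (z $ i * cnj (z $ j))))"

definition cnj_transpose :: "complex^'n^'m \<Rightarrow> complex^'m^'n" where
  "cnj_transpose M = (\<chi> i j. cnj (M $ j $ i))"

definition hermitian :: "complex^'n^'n \<Rightarrow> bool" where
  "hermitian M \<longleftrightarrow> cnj_transpose M = M"

definition posdef :: "complex^'n^'n \<Rightarrow> bool" where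
  "posdef M \<longleftrightarrow> hermitian M \<and>
     (\<forall>x. x \<noteq> 0 \<longrightarrow> Re (\<Sum>i\<in>UNIV. \<Sum>j\<in>UNIV. cnj (x $ i) * M $ i $ j * x $ j) > 0)"

definition hpd_sqrt :: "complex^'n^'n \<Rightarrow> complex^'n^'n" where
  "hpd_sqrt C = (THE R. posdef R \<and> R ** R = C)"

definition char_poly_vec :: "complex^'n^'n \<Rightarrow> complex poly" where
  "char_poly_vec M = det (\<chi> i j. (if i = j then [:0, 1:] else 0) - [:M $ i $ j:])"

definition eigenvalue_family :: "complex^'n^'n \<Rightarrow> ('n \<Rightarrow> complex) \<Rightarrow> bool" where
  "eigenvalue_family M om \<longleftrightarrow> char_poly_vec M = (\<Prod>j\<in>UNIV. [:- om j, 1:])"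

definition hH :: "complex^'m \<Rightarrow> complex^'m \<Rightarrow> complex" where
  "hH h y = (\<Sum>i\<in>UNIV. cnj (h $ i) * y $ i)"

text \<open>x = A v with v = [s; z], A = [[1, h^H],[g, g h^H - I]]; x = [x1; x2].\<close>
definition mixA :: "complex^'m \<Rightarrow> complex^'m \<Rightarrow> complex \<times> (complex^'m) \<Rightarrow> complex \<times> (complex^'m)" where
  "mixA h g v = (case v of (s, z) \<Rightarrow>
      (s + hH h z, s *s g + (hH h z) *s g - z))"

definition wHx :: "complex^'m \<Rightarrow> complex^'m \<Rightarrow> complex \<times> (complex^'m) \<Rightarrow> complex" where
  "wHx h g x = (case x of (x1, x2) \<Rightarrow> (1 - hH h g) * x1 + hH h x2)"

definition Bx :: "complex^'m \<Rightarrow> complex \<times> (complex^'m) \<Rightarrow> complex^'m" where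
  "Bx g x = (case x of (x1, x2) \<Rightarrow> x1 *s g - x2)"

definition loglik :: "(complex \<Rightarrow> real) \<Rightarrow> (complex^'m \<Rightarrow> real) \<Rightarrow> complex^'m \<Rightarrow> complex^'m
     \<Rightarrow> complex \<times> (complex^'m) \<Rightarrow> real" where
  "loglik ps pz h g x = ln (ps (wHx h g x)) + ln (pz (Bx g x))"

definition hpart :: "complex^('m + 'm) \<Rightarrow> complex^'m" where
  "hpart t = (\<chi> i. t $ Inl i)"

definition gpart :: "complex^('m + 'm) \<Rightarrow> complex^'m" where
  "gpart t = (\<chi> i. t $ Inr i)"

definition param :: "complex^'m \<Rightarrow> complex^'m \<Rightarrow> complex^('m + 'm)" where
  "param h g = (\<chi> k. case k of Inl i \<Rightarrow> h $ i | Inr i \<Rightarrow> g $ i)"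

definition score_theta :: "(complex \<Rightarrow> real) \<Rightarrow> (complex^'m \<Rightarrow> real) \<Rightarrow> complex^('m + 'm)
     \<Rightarrow> complex \<times> (complex^'m) \<Rightarrow> complex^('m + 'm)" where
  "score_theta ps pz t0 x =
     vwirt (\<lambda>t. complex_of_real (loglik ps pz (hpart t) (gpart t) x)) t0"

definition Ev :: "(complex \<Rightarrow> real) \<Rightarrow> (complex^'m \<Rightarrow> real)
     \<Rightarrow> (complex \<times> (complex^'m) \<Rightarrow> complex) \<Rightarrow> complex" where
  "Ev ps pz f = integral\<^sup>L (lborel \<Otimes>\<^sub>M lborel)
      (\<lambda>v. complex_of_real (ps (fst v) * pz (snd v)) * f v)"

definition fisherF :: "(complex \<Rightarrow> real) \<Rightarrow> (complex^'m \<Rightarrow> real) \<Rightarrow> complex^('m + 'm)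
     \<Rightarrow> complex^('m + 'm)^('m + 'm)" where
  "fisherF ps pz t0 = (\<chi> i j. Ev ps pz (\<lambda>v.
      let u = score_theta ps pz t0 (mixA (hpart t0) (gpart t0) v) in u $ i * cnj (u $ j)))"

definition fisherP :: "(complex \<Rightarrow> real) \<Rightarrow> (complex^'m \<Rightarrow> real) \<Rightarrow> complex^('m + 'm)
     \<Rightarrow> complex^('m + 'm)^('m + 'm)" where
  "fisherP ps pz t0 = (\<chi> i j. Ev ps pz (\<lambda>v.
      let u = score_theta ps pz t0 (mixA (hpart t0) (gpart t0) v) in u $ i * u $ j))"

text \<open>Augmented Fisher information matrix [[F, P], [P*, F*]].\<close>
definition fisherJ :: "(complex \<Rightarrow> real) \<Rightarrow> (complex^'m \<Rightarrow> real) \<Rightarrow> complex^('m + 'm)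
     \<Rightarrow> complex^(('m + 'm) + ('m + 'm))^(('m + 'm) + ('m + 'm))" where
  "fisherJ ps pz t0 = (let F = fisherF ps pz t0; P = fisherP ps pz t0 in
     (\<chi> a b. case (a, b) of
        (Inl i, Inl j) \<Rightarrow> F $ i $ j
      | (Inl i, Inr j) \<Rightarrow> P $ i $ j
      | (Inr i, Inl j) \<Rightarrow> cnj (P $ i $ j)
      | (Inr i, Inr j) \<Rightarrow> cnj (F $ i $ j)))"

definition crlb_h :: "nat \<Rightarrow> (complex \<Rightarrow> real) \<Rightarrow> (complex^'m \<Rightarrow> real) \<Rightarrow> complex^('m + 'm)
     \<Rightarrow> complex^'m^'m" where
  "crlb_h N ps pz t0 = (let Jinv = matrix_inv (real N *\<^sub>R fisherJ ps pz t0) in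
     (\<chi> i j. Jinv $ Inl (Inl i) $ Inl (Inl j)))"

end

theory Submission
  imports Defs
begin

lemma pderiv_sum': "pderiv (\<Sum>k\<in>A. f k) = (\<Sum>k\<in>A. pderiv (f k))"
  by (induction A rule: infinite_finite_induct) (auto simp: pderiv_add)

lemma pderiv_of_int': "pderiv (of_int k :: 'a::{idom} poly) = 0"
  by (simp add: of_int_poly pderiv_pCons)

lemma poly_det: "poly (det P) c = det (\<chi> i j. poly (P$i$j) c)"
  unfolding det_def by (simp add: poly_sum poly_prod)

lemma pderiv_det:
  fixes P :: "'a::idom poly^'n^'n"
  shows "pderiv (det P) = (\<Sum>k\<in>UNIV. det (\<chi> i. if i = k then (\<chi> j. pderiv (P$i$j)) else P$i))"
proof -
  have "pderiv (det P) = (\<Sum>p\<in>{p. p permutes UNIV}. of_int (sign p) *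
          (\<Sum>k\<in>UNIV. (\<Prod>i\<in>UNIV - {k}. P$i$p i) * pderiv (P$k$p k)))"
    unfolding det_def pderiv_sum' by (simp add: pderiv_mult pderiv_of_int' pderiv_prod)
  also have "\<dots> = (\<Sum>k\<in>UNIV. \<Sum>p\<in>{p. p permutes UNIV}. of_int (sign p) *
          ((\<Prod>i\<in>UNIV - {k}. P$i$p i) * pderiv (P$k$p k)))"
    by (simp add: sum_distrib_left sum.swap[of _ UNIV])
  also have "\<dots> = (\<Sum>k\<in>UNIV. det (\<chi> i. if i = k then (\<chi> j. pderiv (P$i$j)) else P$i))"
  proof (rule sum.cong[OF refl])
    fix k :: 'n
    show "(\<Sum>p\<in>{p. p permutes UNIV}. of_int (sign p) *
          ((\<Prod>i\<in>UNIV - {k}. P$i$p i) * pderiv (P$k$p k))) =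
          det (\<chi> i. if i = k then (\<chi> j. pderiv (P$i$j)) else P$i)"
      unfolding det_def
    proof (rule sum.cong[OF refl])
      fix p
      have "(\<Prod>i\<in>UNIV. (\<chi> i. if i = k then (\<chi> j. pderiv (P$i$j)) else P$i) $ i $ p i)
          = pderiv (P$k$p k) * (\<Prod>i\<in>UNIV - {k}. P$i$p i)"
        by (subst prod.remove[of _ k]) (auto intro!: prod.cong)
      then show "of_int (sign p) * ((\<Prod>i\<in>UNIV - {k}. P$i$p i) * pderiv (P$k$p k)) =
          of_int (sign p) * (\<Prod>i\<in>UNIV. (\<chi> i. if i = k then (\<chi> j. pderiv (P$i$j)) else P$i) $ i $ p i)"
        by (simp add: mult.commute)
    qed
  qed
  finally show ?thesis .
qed

lemma minv:
  fixes A :: "'a::field^'n^'n"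
  assumes "invertible A"
  shows "A ** matrix_inv A = mat 1" "matrix_inv A ** A = mat 1"
proof -
  have "\<exists>A'. A ** A' = mat 1 \<and> A' ** A = mat 1" using assms unfolding invertible_def by blast
  then have "A ** matrix_inv A = mat 1 \<and> matrix_inv A ** A = mat 1"
    unfolding matrix_inv_def by (rule someI_ex)
  then show "A ** matrix_inv A = mat 1" "matrix_inv A ** A = mat 1" by auto
qed

lemma minv_unique:
  fixes A B :: "'a::field^'n^'n"
  assumes "A ** B = mat 1"
  shows "matrix_inv A = B" "invertible A"
proof -
  have BA: "B ** A = mat 1" using assms matrix_left_right_inverse by blast
  show inv: "invertible A" unfolding invertible_def using assms BA by blast
  have "matrix_inv A = matrix_inv A ** (A ** B)" by (simp add: assms)
  also have "\<dots> = (matrix_inv A ** A) ** B" by (simp add: matrix_mul_assoc)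
  also have "\<dots> = B" using minv[OF inv] by simp
  finally show "matrix_inv A = B" .
qed

lemma minv_unique_left:
  fixes A B :: "'a::field^'n^'n"
  assumes "B ** A = mat 1"
  shows "matrix_inv A = B" "invertible A"
  using minv_unique assms matrix_left_right_inverse by blast+

lemma det_row_unit:
  fixes A :: "'a::field^'n^'n"
  assumes "invertible A"
  shows "det (\<chi> i. if i = k then axis k 1 else row i A) = det A * matrix_inv A $ k $ k"
proof -
  define x where "x = row k (matrix_inv A)"
  have s: "(\<Sum>i\<in>UNIV. x$i *s row i A) = axis k 1"
  proof -
    have "(\<Sum>i\<in>UNIV. x$i *s row i A) $ j = (matrix_inv A ** A) $ k $ j" for j
      unfolding x_def by (simp add: matrix_matrix_mult_def row_def sum_component)
    then show ?thesis using minv(2)[OF assms]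
      by (simp add: vec_eq_iff mat_def axis_def)
  qed
  then have "det (\<chi> i. if i = k then axis k 1 else row i A) = x$k * det A"
    using cramer_lemma_transpose[of k x A] unfolding s by simp
  then show ?thesis unfolding x_def by (simp add: row_def mult.commute)
qed

lemma char_poly_eval:
  "poly (char_poly_vec T) c = det (mat c - T)"
  unfolding char_poly_vec_def poly_det
  by (rule arg_cong[where f=det]) (simp add: vec_eq_iff mat_def)

lemma char_poly_deriv_eval:
  fixes T :: "complex^'n^'n"
  assumes "invertible (mat c - T)"
  shows "poly (pderiv (char_poly_vec T)) c = det (mat c - T) * trace (matrix_inv (mat c - T))"
proof -
  let ?P = "(\<chi> i j. (if i = j then [:0, 1:] else 0) - [:T $ i $ j:]) :: complex poly^'n^'n"
  have "poly (pderiv (char_poly_vec T)) c =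
      (\<Sum>k\<in>UNIV. poly (det (\<chi> i. if i = k then (\<chi> j. pderiv (?P$i$j)) else ?P$i)) c)"
    unfolding char_poly_vec_def pderiv_det poly_sum ..
  also have "\<dots> = (\<Sum>k\<in>UNIV. det (\<chi> i. if i = k then axis k 1 else row i (mat c - T)))"
  proof (rule sum.cong[OF refl])
    fix k
    show "poly (det (\<chi> i. if i = k then (\<chi> j. pderiv (?P$i$j)) else ?P$i)) c =
        det (\<chi> i. if i = k then axis k 1 else row i (mat c - T))"
      unfolding poly_det
      by (rule arg_cong[where f=det])
         (auto simp: vec_eq_iff mat_def axis_def row_def pderiv_diff pderiv_pCons)
  qed
  also have "\<dots> = (\<Sum>k\<in>UNIV. det (mat c - T) * matrix_inv (mat c - T) $ k $ k)"
    using det_row_unit[OF assms] by simp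
  also have "\<dots> = det (mat c - T) * trace (matrix_inv (mat c - T))"
    unfolding trace_def sum_distrib_left ..
  finally show ?thesis .
qed

lemma poly_pderiv_prod_lin:
  fixes om :: "'n::finite \<Rightarrow> complex"
  assumes "\<forall>j. c \<noteq> om j"
  shows "poly (pderiv (\<Prod>j\<in>UNIV. [:- om j, 1:])) c =
     (\<Prod>j\<in>UNIV. (c - om j)) * (\<Sum>j\<in>UNIV. 1 / (c - om j))"
proof -
  have "poly (pderiv (\<Prod>j\<in>UNIV. [:- om j, 1:])) c = (\<Sum>a\<in>UNIV. \<Prod>j\<in>UNIV - {a}. (c - om j))"
    by (simp add: pderiv_prod poly_sum poly_prod pderiv_pCons)
  also have "\<dots> = (\<Sum>a\<in>UNIV. (\<Prod>j\<in>UNIV. (c - om j)) * (1 / (c - om a)))"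
  proof (rule sum.cong[OF refl])
    fix a
    have "(\<Prod>j\<in>UNIV. (c - om j)) = (c - om a) * (\<Prod>j\<in>UNIV - {a}. (c - om j))"
      by (rule prod.remove) auto
    then show "(\<Prod>j\<in>UNIV - {a}. (c - om j)) = (\<Prod>j\<in>UNIV. (c - om j)) * (1 / (c - om a))"
      using assms by (simp add: field_simps)
  qed
  also have "\<dots> = (\<Prod>j\<in>UNIV. (c - om j)) * (\<Sum>j\<in>UNIV. 1 / (c - om j))"
    by (simp add: sum_distrib_left)
  finally show ?thesis .
qed

lemma trace_inv_eigen:
  fixes T :: "complex^'n^'n" and om :: "'n \<Rightarrow> complex"
  assumes cp: "char_poly_vec T = (\<Prod>j\<in>UNIV. [:- om j, 1:])"
    and inv: "invertible (mat c - T)"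
  shows "trace (matrix_inv (mat c - T)) = (\<Sum>j\<in>UNIV. 1 / (c - om j))"
    "\<forall>j. c \<noteq> om j"
proof -
  have d: "det (mat c - T) \<noteq> 0" using inv invertible_det_nz by blast
  have pe: "det (mat c - T) = (\<Prod>j\<in>UNIV. (c - om j))"
    using char_poly_eval[of T c] cp by (simp add: poly_prod)
  show ne: "\<forall>j. c \<noteq> om j"
  proof (intro allI notI)
    fix j assume "c = om j"
    then have "(\<Prod>ja\<in>UNIV. c - om ja) = 0" by (intro prod_zero) auto
    with d pe show False by simp
  qed
  have "det (mat c - T) * trace (matrix_inv (mat c - T)) = det (mat c - T) * (\<Sum>j\<in>UNIV. 1 / (c - om j))"
    by (metis char_poly_deriv_eval[OF inv] poly_pderiv_prod_lin[OF ne] cp pe)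
  then show "trace (matrix_inv (mat c - T)) = (\<Sum>j\<in>UNIV. 1 / (c - om j))" using d by simp
qed

lemma mm_diff_l: "(A::'a::ring_1^'n^'m) ** (B - C) = A ** B - A ** C"
  by (simp add: matrix_matrix_mult_def vec_eq_iff algebra_simps sum_subtractf)
lemma mm_diff_r: "((A::'a::ring_1^'n^'m) - B) ** C = A ** C - B ** C"
  by (simp add: matrix_matrix_mult_def vec_eq_iff algebra_simps sum_subtractf)
lemma mm_neg_l: "(- (A::'a::ring_1^'n^'m)) ** B = - (A ** B)"
  by (simp add: matrix_matrix_mult_def vec_eq_iff sum_negf)
lemma mm_neg_r: "(A::'a::ring_1^'n^'m) ** (- B) = - (A ** B)"
  by (simp add: matrix_matrix_mult_def vec_eq_iff sum_negf)
lemma mm_add_r: "((A::'a::ring_1^'n^'m) + B) ** C = A ** C + B ** C"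
  by (simp add: matrix_matrix_mult_def vec_eq_iff algebra_simps sum.distrib)
lemma mm_scaleR_l: "(k *\<^sub>R (A::'a::real_algebra_1^'n^'m)) ** B = k *\<^sub>R (A ** B)"
  by (simp add: scalar_matrix_assoc)
lemma mm_scaleR_r: "(A::'a::real_algebra_1^'n^'m) ** (k *\<^sub>R B) = k *\<^sub>R (A ** B)"
  by (simp add: matrix_matrix_mult_def sum_distrib_left mult_ac vec_eq_iff scaleR_sum_right)
lemma mat_mult_l: "(mat c :: 'a::semiring_1^'n^'n) ** A = (\<chi> i j. c * A$i$j)"
  unfolding matrix_matrix_mult_def mat_def
  by (auto simp: vec_eq_iff if_distrib if_distribR sum.delta'[OF finite] cong: if_cong)
lemma mat_mult_r: "(A :: 'a::semiring_1^'n^'m) ** mat c = (\<chi> i j. A$i$j * c)"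
  unfolding matrix_matrix_mult_def mat_def
  by (auto simp: vec_eq_iff if_distrib if_distribR sum.delta'[OF finite] cong: if_cong)
lemma mat_comm: "(mat c :: 'a::comm_semiring_1^'n^'n) ** A = A ** mat c"
  unfolding mat_mult_l mat_mult_r by (simp add: mult.commute)
lemma trace_mat_mult: "trace ((mat c :: 'a::comm_semiring_1^'n^'n) ** A) = c * trace A"
  unfolding mat_mult_l trace_def by (simp add: sum_distrib_left)
lemma trace_neg: "trace (- (A :: 'a::ring_1^'n^'n)) = - trace A"
  unfolding trace_def by (simp add: sum_negf)
lemma trace_scaleR: "trace (k *\<^sub>R (A :: 'a::real_algebra_1^'n^'n)) = k *\<^sub>R trace A"
  unfolding trace_def by (simp add: scaleR_sum_right)

definition liftp :: "'a::comm_ring_1^'n^'m \<Rightarrow> 'a poly^'n^'m" where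
  "liftp A = (\<chi> i j. [:A$i$j:])"

lemma const_poly_add: "[:a + b:] = [:a:] + [:b:]"
  by (simp add: add_pCons)

lemma const_poly_sum: "[:\<Sum>k\<in>A. f k:] = (\<Sum>k\<in>A. [:f k:])"
  by (induction A rule: infinite_finite_induct) (auto simp: const_poly_add)

lemma liftp_mult': "liftp (A ** B) = liftp A ** liftp B"
  unfolding liftp_def matrix_matrix_mult_def by (simp add: vec_eq_iff const_poly_sum mult_ac)

lemma liftp_one: "liftp (mat 1 :: 'a::comm_ring_1^'n^'n) = mat 1"
  unfolding liftp_def mat_def by (simp add: vec_eq_iff one_pCons)

lemma liftp_diff: "liftp (A - B) = liftp A - liftp B"
  unfolding liftp_def by (simp add: vec_eq_iff)

lemma char_poly_liftp: "char_poly_vec T = det (mat [:0,1:] - liftp T)"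
  unfolding char_poly_vec_def liftp_def mat_def by (rule arg_cong[where f=det]) (simp add: vec_eq_iff)

lemma char_poly_similar:
  fixes P M :: "complex^'n^'n"
  assumes "invertible P"
  shows "char_poly_vec (P ** M ** matrix_inv P) = char_poly_vec M"
proof -
  let ?P = "liftp P" and ?Q = "liftp (matrix_inv P)"
  have PQ: "?P ** ?Q = mat 1" using minv[OF assms] by (simp add: liftp_mult'[symmetric] liftp_one)
  have "mat [:0,1:] - liftp (P ** M ** matrix_inv P) = ?P ** (mat [:0,1:] - liftp M) ** ?Q"
  proof -
    have "?P ** mat [:0,1:] ** ?Q = mat [:0,1:]"
      by (metis PQ mat_comm matrix_mul_assoc matrix_mul_lid)
    then show ?thesis
      by (simp add: mm_diff_l mm_diff_r liftp_mult' matrix_mul_assoc)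
  qed
  then have "char_poly_vec (P ** M ** matrix_inv P) = det ?P * char_poly_vec M * det ?Q"
    by (simp add: char_poly_liftp det_mul)
  also have "\<dots> = char_poly_vec M * det (?P ** ?Q)" by (simp add: det_mul)
  also have "\<dots> = char_poly_vec M" using PQ by simp
  finally show ?thesis .
qed

lemma cscale: "(k::real) *\<^sub>R (z::complex) = of_real k * z"
  by (simp add: scaleR_conv_of_real)

lemma scaleR_mat_mult: "(k::real) *\<^sub>R (A::complex^'n^'n) = mat (of_real k) ** A"
  unfolding mat_mult_l by (simp add: vec_eq_iff cscale)

lemma final_trace:
  fixes C K R :: "complex^'n^'n" and s2 ks :: real and om :: "'n \<Rightarrow> complex" and N :: nat
  assumes RR: "R ** R = C" and invR: "invertible R" and invK: "invertible K"
    and s2: "s2 \<noteq> 0" and ks: "ks \<noteq> 0"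
    and invS: "invertible (ks *\<^sub>R C - (1 / s2) *\<^sub>R matrix_inv K)"
    and cp: "char_poly_vec (R ** K ** R) = (\<Prod>j\<in>UNIV. [:- om j, 1:])"
  shows "complex_of_real (1 / s2) * trace (C ** ((1 / real N) *\<^sub>R matrix_inv (ks *\<^sub>R C - (1 / s2) *\<^sub>R matrix_inv K)))
     = (1 / of_nat N) * (\<Sum>j\<in>UNIV. om j / (of_real (s2 * ks) * om j - 1))"
proof -
  define S where "S = ks *\<^sub>R C - (1 / s2) *\<^sub>R matrix_inv K"
  define Ki where "Ki = matrix_inv K"
  define T where "T = C ** K"
  define a where "a = s2 * ks"
  have a0: "a \<noteq> 0" using s2 ks by (simp add: a_def)
  define Q where "Q = a *\<^sub>R T - mat 1"
  have KKi: "K ** Ki = mat 1" "Ki ** K = mat 1" using minv[OF invK] by (auto simp: Ki_def)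
  have S_eq: "S = (1 / s2) *\<^sub>R (Q ** Ki)"
  proof -
    have "Q ** Ki = a *\<^sub>R C - Ki"
      by (simp add: Q_def T_def mm_diff_r mm_scaleR_l KKi matrix_mul_assoc[symmetric])
    then show ?thesis using s2 by (simp add: S_def Ki_def a_def scaleR_diff_right)
  qed
  have Q_eq: "Q = s2 *\<^sub>R (S ** K)"
    using s2 by (simp add: S_eq mm_scaleR_l matrix_mul_assoc[symmetric] KKi)
  have invQ: "invertible Q"
  proof -
    have "invertible (S ** K)" using invS invK invertible_mult by (auto simp: S_def)
    then show ?thesis unfolding Q_eq using s2 by (simp add: scalar_invertible)
  qed
  define Z where "Z = matrix_inv Q"
  have QZ: "Q ** Z = mat 1" using minv[OF invQ] Z_def by auto
  have Sinv: "matrix_inv S = s2 *\<^sub>R (K ** Z)"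
  proof (rule minv_unique)
    show "S ** (s2 *\<^sub>R (K ** Z)) = mat 1"
      using s2 by (simp add: S_eq mm_scaleR_l mm_scaleR_r matrix_mul_assoc KKi)
         (metis QZ matrix_mul_assoc matrix_mul_rid KKi(2))
  qed
  have CSinv: "C ** matrix_inv S = s2 *\<^sub>R (T ** Z)"
    by (simp add: Sinv mm_scaleR_r T_def matrix_mul_assoc)
  define c where "c = complex_of_real (1 / a)"
  define D where "D = mat c - T"
  have Q_D: "Q = (- a) *\<^sub>R D"
  proof -
    have "(- a) *\<^sub>R mat c = - (mat 1 :: complex^'n^'n)"
      using a0 by (simp add: c_def vec_eq_iff mat_def cscale)
    then show ?thesis by (simp add: Q_def D_def scaleR_diff_right)
  qed
  have invD: "invertible D"
  proof -
    have "D = (- 1 / a) *\<^sub>R Q" using a0 by (simp add: Q_D)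
    moreover have "invertible ((- 1 / a) *\<^sub>R Q)" using invQ a0 by (intro scalar_invertible) auto
    ultimately show ?thesis by simp
  qed
  define W where "W = matrix_inv D"
  have DW: "D ** W = mat 1" using minv[OF invD] W_def by auto
  have Z_eq: "Z = (- 1 / a) *\<^sub>R W"
    unfolding Z_def
  proof (rule minv_unique)
    show "Q ** ((- 1 / a) *\<^sub>R W) = mat 1" using a0 by (simp add: Q_D mm_scaleR_l mm_scaleR_r mm_neg_l mm_neg_r DW)
  qed
  have TW: "T ** W = mat c ** W - mat 1"
  proof -
    have "T = mat c - D" by (simp add: D_def)
    then show ?thesis by (simp add: mm_diff_r DW)
  qed
  have cpT: "char_poly_vec T = (\<Prod>j\<in>UNIV. [:- om j, 1:])"
  proof -
    have "T = R ** (R ** K ** R) ** matrix_inv R"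
      using minv[OF invR] by (simp add: T_def RR[symmetric] matrix_mul_assoc[symmetric])
    then show ?thesis using char_poly_similar[OF invR, of "R ** K ** R"] cp by simp
  qed
  from trace_inv_eigen[OF cpT, of c] invD
  have trW: "trace W = (\<Sum>j\<in>UNIV. 1 / (c - om j))" and ne: "\<forall>j. c \<noteq> om j"
    by (auto simp: D_def W_def)
  have trTZ: "trace (T ** Z) = (\<Sum>j\<in>UNIV. om j / (of_real a * om j - 1))"
  proof -
    have "trace (T ** Z) = of_real (- 1 / a) * (c * trace W - of_nat CARD('n))"
      by (simp add: Z_eq mm_scaleR_r mm_neg_r trace_neg trace_scaleR TW trace_sub trace_mat_mult trace_I cscale)
    also have "\<dots> = (\<Sum>j\<in>UNIV. of_real (- 1 / a) * (c / (c - om j) - 1))"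
      by (simp add: trW sum_distrib_left sum_subtractf right_diff_distrib sum_negf)
    also have "\<dots> = (\<Sum>j\<in>UNIV. om j / (of_real a * om j - 1))"
    proof (rule sum.cong[OF refl])
      fix j
      have cj: "c - om j \<noteq> 0" using ne by auto
      have aj: "of_real a * om j - 1 \<noteq> 0"
      proof
        assume "of_real a * om j - 1 = 0"
        then have "om j = c" using a0 by (simp add: c_def field_simps)
        then show False using ne by auto
      qed
      show "of_real (- 1 / a) * (c / (c - om j) - 1) = om j / (of_real a * om j - 1)"
        using cj aj a0 by (simp add: c_def field_simps)
    qed
    finally show ?thesis .
  qed
  show ?thesis
    unfolding S_def[symmetric]
    by (simp add: mm_scaleR_r trace_scaleR CSinv trTZ a_def cscale s2)
qed

lemma sum_UNIV_plus:
  "(\<Sum>x\<in>(UNIV::('a::finite + 'b::finite) set). f x) = (\<Sum>x\<in>UNIV. f (Inl x)) + (\<Sum>x\<in>UNIV. f (Inr x))"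
proof -
  have "(\<Sum>x\<in>(UNIV::('a + 'b) set). f x) = (\<Sum>x\<in>(UNIV <+> UNIV). f x)" by simp
  also have "\<dots> = (\<Sum>x\<in>UNIV. f (Inl x)) + (\<Sum>x\<in>UNIV. f (Inr x))"
    by (subst sum.Plus) (auto simp: o_def)
  finally show ?thesis .
qed

lemma crlb_block:
  fixes J :: "complex^(('n::finite + 'n) + ('n + 'n))^(('n + 'n) + ('n + 'n))"
    and C K :: "complex^'n^'n" and ks s2 :: real and N :: nat
  assumes invJ: "invertible J" and invK: "invertible K" and s2: "s2 \<noteq> 0" and N: "N > 0"
    and J1: "\<And>i j. J $ Inl (Inl i) $ Inl (Inl j) = of_real ks * C $ i $ j"
    and J2: "\<And>i j. J $ Inl (Inl i) $ Inl (Inr j) = (if i = j then - 1 else 0)"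
    and J3: "\<And>i j. J $ Inl (Inr i) $ Inl (Inl j) = (if i = j then - 1 else 0)"
    and J4: "\<And>i j. J $ Inl (Inr i) $ Inl (Inr j) = of_real s2 * K $ i $ j"
    and J5: "\<And>i b. J $ Inl i $ Inr b = 0"
  shows "(\<chi> i j. matrix_inv (real N *\<^sub>R J) $ Inl (Inl i) $ Inl (Inl j))
           = (1 / real N) *\<^sub>R matrix_inv (ks *\<^sub>R C - (1 / s2) *\<^sub>R matrix_inv K)"
    "invertible (ks *\<^sub>R C - (1 / s2) *\<^sub>R matrix_inv K)"
proof -
  define M where "M = matrix_inv J"
  have JM: "J ** M = mat 1" using minv[OF invJ] M_def by auto
  define X where "X = (\<chi> i j. M $ Inl (Inl i) $ Inl (Inl j))"
  define Y where "Y = (\<chi> i j. M $ Inl (Inr i) $ Inl (Inl j))"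
  have row: "(J ** M) $ Inl a $ c = (\<Sum>k\<in>UNIV. J $ Inl a $ Inl (Inl k) * M $ Inl (Inl k) $ c)
        + (\<Sum>k\<in>UNIV. J $ Inl a $ Inl (Inr k) * M $ Inl (Inr k) $ c)" for a c
    unfolding matrix_matrix_mult_def by (simp add: sum_UNIV_plus J5)
  have e1: "ks *\<^sub>R (C ** X) - Y = mat 1"
  proof -
    have "(J ** M) $ Inl (Inl i) $ Inl (Inl j) = (ks *\<^sub>R (C ** X) - Y) $ i $ j" for i j
      unfolding row J1 J2
      by (simp add: X_def Y_def matrix_matrix_mult_def cscale sum_distrib_left mult.assoc
            if_distrib if_distribR sum.delta cong: if_cong)
    then show ?thesis using JM by (simp add: vec_eq_iff mat_def)
  qed
  have e2: "s2 *\<^sub>R (K ** Y) - X = 0"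
  proof -
    have "(J ** M) $ Inl (Inr i) $ Inl (Inl j) = (s2 *\<^sub>R (K ** Y) - X) $ i $ j" for i j
      unfolding row J3 J4
      by (simp add: X_def Y_def matrix_matrix_mult_def cscale sum_distrib_left mult.assoc
            if_distrib if_distribR sum.delta cong: if_cong)
    then show ?thesis using JM by (simp add: vec_eq_iff mat_def)
  qed
  define Ki where "Ki = matrix_inv K"
  have KKi: "K ** Ki = mat 1" "Ki ** K = mat 1" using minv[OF invK] by (auto simp: Ki_def)
  have Yeq: "Y = (1 / s2) *\<^sub>R (Ki ** X)"
  proof -
    have "s2 *\<^sub>R (K ** Y) = X" using e2 by simp
    then have "(1 / s2) *\<^sub>R (s2 *\<^sub>R (K ** Y)) = (1 / s2) *\<^sub>R X" by simp
    then have "K ** Y = (1 / s2) *\<^sub>R X" using s2 by simp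
    then have "Ki ** (K ** Y) = (1 / s2) *\<^sub>R (Ki ** X)" by (simp add: mm_scaleR_r)
    then show ?thesis by (simp add: matrix_mul_assoc KKi)
  qed
  have SX: "(ks *\<^sub>R C - (1 / s2) *\<^sub>R Ki) ** X = mat 1"
    using e1 by (simp add: mm_diff_r mm_scaleR_l Yeq)
  show "invertible (ks *\<^sub>R C - (1 / s2) *\<^sub>R matrix_inv K)"
    using minv_unique(2)[OF SX] by (simp add: Ki_def)
  have Sinv: "matrix_inv (ks *\<^sub>R C - (1 / s2) *\<^sub>R matrix_inv K) = X"
    using minv_unique(1)[OF SX] by (simp add: Ki_def)
  have NJ: "matrix_inv (real N *\<^sub>R J) = (1 / real N) *\<^sub>R M"
    by (rule minv_unique) (use N JM in \<open>simp add: mm_scaleR_l mm_scaleR_r\<close>)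
  show "(\<chi> i j. matrix_inv (real N *\<^sub>R J) $ Inl (Inl i) $ Inl (Inl j))
           = (1 / real N) *\<^sub>R matrix_inv (ks *\<^sub>R C - (1 / s2) *\<^sub>R matrix_inv K)"
    unfolding Sinv NJ by (simp add: X_def vec_eq_iff)
qed

definition ip :: "complex^'n \<Rightarrow> complex^'n \<Rightarrow> complex" where
  "ip x y = (\<Sum>i\<in>UNIV. cnj (x$i) * y$i)"

lemma qf_ip: "(\<Sum>i\<in>UNIV. \<Sum>j\<in>UNIV. cnj (x $ i) * M $ i $ j * x $ j) = ip x (M *v x)"
  unfolding ip_def matrix_vector_mult_def by (simp add: sum_distrib_left mult.assoc)

lemma hermitianD: "hermitian M \<Longrightarrow> cnj (M $ j $ i) = M $ i $ j"
  unfolding hermitian_def cnj_transpose_def by (metis vec_lambda_beta)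

lemma hermitianI: "(\<And>i j. cnj (M $ j $ i) = M $ i $ j) \<Longrightarrow> hermitian M"
  unfolding hermitian_def cnj_transpose_def by (simp add: vec_eq_iff)

lemma ip_cnj: "cnj (ip x y) = ip y x"
  unfolding ip_def by (simp add: mult.commute)

lemma ip_herm: assumes h: "hermitian M" shows "ip x (M *v y) = ip (M *v x) y"
proof -
  have "ip (M *v x) y = (\<Sum>i\<in>UNIV. \<Sum>j\<in>UNIV. cnj (M $ i $ j) * cnj (x $ j) * y $ i)"
    unfolding ip_def matrix_vector_mult_def by (simp add: sum_distrib_right)
  also have "\<dots> = (\<Sum>j\<in>UNIV. \<Sum>i\<in>UNIV. cnj (M $ i $ j) * cnj (x $ j) * y $ i)"
    by (rule sum.swap)
  also have "\<dots> = ip x (M *v y)"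
    unfolding ip_def matrix_vector_mult_def by (simp add: hermitianD[OF h] sum_distrib_left mult_ac)
  finally show ?thesis by simp
qed

lemma ip_self: "ip x x = of_real ((norm x)\<^sup>2)"
proof -
  have "ip x x = (\<Sum>i\<in>UNIV. of_real ((norm (x$i))\<^sup>2))"
    unfolding ip_def
  proof (rule sum.cong[OF refl])
    fix i show "cnj (x $ i) * x $ i = complex_of_real ((cmod (x $ i))\<^sup>2)"
      by (subst complex_norm_square) (simp add: mult.commute)
  qed
  also have "\<dots> = of_real (\<Sum>i\<in>UNIV. (norm (x$i))\<^sup>2)" by simp
  also have "(\<Sum>i\<in>UNIV. (norm (x$i))\<^sup>2) = (norm x)\<^sup>2"
    unfolding norm_vec_def L2_set_def by (simp add: sum_nonneg)
  finally show ?thesis .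
qed

lemma ip_self_zero: "ip x x = 0 \<longleftrightarrow> x = 0"
  by (simp add: ip_self)

lemma ip_add_r: "ip x (y + z) = ip x y + ip x z"
  unfolding ip_def by (simp add: algebra_simps sum.distrib)
lemma ip_add_l: "ip (x + y) z = ip x z + ip y z"
  unfolding ip_def by (simp add: algebra_simps sum.distrib)
lemma ip_diff_r: "ip x (y - z) = ip x y - ip x z"
  unfolding ip_def by (simp add: algebra_simps sum_subtractf)
lemma ip_diff_l: "ip (x - y) z = ip x z - ip y z"
  unfolding ip_def by (simp add: algebra_simps sum_subtractf)
lemma ip_scale_r: "ip x (c *s y) = c * ip x y"
  unfolding ip_def by (simp add: algebra_simps sum_distrib_left)
lemma ip_scale_l: "ip (c *s x) y = cnj c * ip x y"
  unfolding ip_def by (simp add: algebra_simps sum_distrib_left)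
lemma ip_zero_l[simp]: "ip 0 y = 0" unfolding ip_def by simp
lemma ip_zero_r[simp]: "ip x 0 = 0" unfolding ip_def by simp
lemma ip_sum_r: "ip x (\<Sum>v\<in>S. f v) = (\<Sum>v\<in>S. ip x (f v))"
  by (induction S rule: infinite_finite_induct) (auto simp: ip_add_r)
lemma ip_sum_l: "ip (\<Sum>v\<in>S. f v) y = (\<Sum>v\<in>S. ip (f v) y)"
  by (induction S rule: infinite_finite_induct) (auto simp: ip_add_l)

lemma posdef_qf: "posdef M \<Longrightarrow> x \<noteq> 0 \<Longrightarrow> Re (ip x (M *v x)) > 0"
  unfolding posdef_def qf_ip by auto

lemma herm_qf_real: "hermitian M \<Longrightarrow> Im (ip x (M *v x)) = 0"
proof -
  assume h: "hermitian M"
  have "cnj (ip x (M *v x)) = ip x (M *v x)"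
    by (simp add: ip_cnj ip_herm[OF h])
  then show ?thesis by (metis Reals_cnj_iff complex_is_Real_iff)
qed

lemma posdef_inj: "posdef M \<Longrightarrow> M *v x = 0 \<Longrightarrow> x = 0"
  using posdef_qf by fastforce

lemma posdef_invertible: "posdef (M::complex^'n^'n) \<Longrightarrow> invertible M"
proof -
  assume p: "posdef M"
  have "inj ((*v) M)"
  proof (rule injI)
    fix x y assume "M *v x = M *v y"
    then have "M *v (x - y) = 0" by (simp add: matrix_vector_mult_diff_distrib)
    then have "x - y = 0" using posdef_inj[OF p] by blast
    then show "x = y" by simp
  qed
  then show ?thesis
    using invertible_det_nz det_nz_iff_inj_gen[of "(*v) M"] matrix_vector_mul_linear_gen
    by (metis matrix_of_matrix_vector_mul)
qed

lemma herm_diff: "hermitian A \<Longrightarrow> hermitian B \<Longrightarrow> hermitian (A - B)"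
  by (intro hermitianI) (simp add: hermitianD)

lemma trace_DRD:
  fixes D R :: "complex^'n^'n"
  assumes hD: "hermitian D"
  shows "trace (D ** R ** D) = (\<Sum>i\<in>UNIV. ip (column i D) (R *v column i D))"
proof -
  have "trace (D ** R ** D) = (\<Sum>i\<in>UNIV. \<Sum>k\<in>UNIV. \<Sum>l\<in>UNIV. D$i$k * R$k$l * D$l$i)"
    unfolding trace_def matrix_matrix_mult_def
    apply (simp add: sum_distrib_right)
    apply (rule sum.cong[OF refl])
    apply (rule sum.swap)
    done
  also have "\<dots> = (\<Sum>i\<in>UNIV. \<Sum>k\<in>UNIV. \<Sum>l\<in>UNIV. cnj (D$k$i) * R$k$l * D$l$i)"
    by (simp add: hermitianD[OF hD])
  also have "\<dots> = (\<Sum>i\<in>UNIV. ip (column i D) (R *v column i D))"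
    unfolding ip_def matrix_vector_mult_def column_def by (simp add: sum_distrib_left mult_ac)
  finally show ?thesis .
qed

lemma posdef_sqrt_unique:
  fixes R1 R2 :: "complex^'n^'n"
  assumes p1: "posdef R1" and p2: "posdef R2" and eq: "R1 ** R1 = R2 ** R2"
  shows "R1 = R2"
proof -
  define D where "D = R1 - R2"
  have hD: "hermitian D" unfolding D_def using p1 p2 herm_diff posdef_def by blast
  have "R1 ** D + D ** R2 = 0"
    unfolding D_def by (simp add: mm_diff_l mm_diff_r eq)
  then have z: "D ** (R1 ** D + D ** R2) = 0" by simp
  have "D ** (R1 ** D + D ** R2) = D ** R1 ** D + D ** D ** R2"
    by (simp add: matrix_add_ldistrib matrix_mul_assoc)
  then have "D ** R1 ** D + D ** D ** R2 = 0" using z by simp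
  then have "trace (D ** R1 ** D + D ** D ** R2) = 0" by (simp add: trace_def)
  then have "trace (D ** R1 ** D) + trace (D ** D ** R2) = 0" by (simp add: trace_add)
  moreover have "trace (D ** D ** R2) = trace (D ** R2 ** D)"
    by (metis matrix_mul_assoc trace_mul_sym)
  ultimately have tr: "trace (D ** R1 ** D) + trace (D ** R2 ** D) = 0" by simp
  define q1 where "q1 i = Re (ip (column i D) (R1 *v column i D))" for i
  define q2 where "q2 i = Re (ip (column i D) (R2 *v column i D))" for i
  have "(\<Sum>i\<in>UNIV. q1 i + q2 i) = Re (trace (D ** R1 ** D) + trace (D ** R2 ** D))"
    unfolding trace_DRD[OF hD] q1_def q2_def by (simp add: sum.distrib)
  then have s0: "(\<Sum>i\<in>UNIV. q1 i + q2 i) = 0" using tr by simp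
  have nn: "q1 i + q2 i \<ge> 0" for i
    using posdef_qf[OF p1, of "column i D"] posdef_qf[OF p2, of "column i D"]
    unfolding q1_def q2_def by (cases "column i D = 0") auto
  have q0: "q1 i + q2 i = 0" for i
    using s0 nn sum_nonneg_eq_0_iff[of UNIV "\<lambda>i. q1 i + q2 i"] by auto
  have "column i D = 0" for i
  proof (rule ccontr)
    assume "column i D \<noteq> 0"
    then have "q1 i > 0" "q2 i > 0"
      using posdef_qf[OF p1, of "column i D"] posdef_qf[OF p2, of "column i D"]
      unfolding q1_def q2_def by auto
    then show False using q0[of i] by simp
  qed
  then have "D = 0"
    unfolding column_def by (simp add: vec_eq_iff)
  then show ?thesis by (simp add: D_def)
qed

lemma quad_nonpos_lin0:
  fixes b c :: real
  assumes "\<forall>t. 2 * t * b + t\<^sup>2 * c \<le> 0"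
  shows "b = 0"
proof (rule ccontr)
  assume b: "b \<noteq> 0"
  define t where "t = b / (\<bar>c\<bar> + 1)"
  have d: "\<bar>c\<bar> + 1 > 0" by simp
  have "t\<^sup>2 * (- \<bar>c\<bar>) \<le> t\<^sup>2 * c" by (rule mult_left_mono) auto
  then have "t\<^sup>2 * c \<ge> - (t\<^sup>2 * \<bar>c\<bar>)" by simp
  moreover have "t\<^sup>2 * \<bar>c\<bar> \<le> t * b"
  proof -
    have "t\<^sup>2 * \<bar>c\<bar> = b\<^sup>2 * \<bar>c\<bar> / (\<bar>c\<bar> + 1)\<^sup>2" by (simp add: t_def power_divide)
    also have "\<dots> = (b\<^sup>2 / (\<bar>c\<bar> + 1)) * (\<bar>c\<bar> / (\<bar>c\<bar> + 1))"
      by (simp add: power2_eq_square)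
    also have "\<dots> \<le> b\<^sup>2 / (\<bar>c\<bar> + 1)"
      by (rule mult_left_le) (use d in auto)
    also have "\<dots> = t * b" by (simp add: t_def power2_eq_square)
    finally show ?thesis .
  qed
  moreover have "t * b > 0" using b d by (simp add: t_def zero_less_mult_iff power2_eq_square[symmetric])
  ultimately have "2 * t * b + t\<^sup>2 * c > 0" by linarith
  then show False using assms by (meson not_le)
qed

lemma cont_ip: "continuous_on UNIV (\<lambda>x. ip v x)"
  unfolding ip_def by (intro continuous_intros)

lemma cont_ip2: "continuous_on UNIV (\<lambda>x. ip x (A *v x))"
  unfolding ip_def matrix_vector_mult_def by (intro continuous_intros)

lemma mv_scale: "(A::'a::comm_ring_1^'n^'m) *v (c *s x) = c *s (A *v x)"
  by (simp add: matrix_vector_mult_def vec_eq_iff sum_distrib_left mult_ac)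

lemma mv_sum: "(A::'a::comm_ring_1^'n^'m) *v (\<Sum>v\<in>S. f v) = (\<Sum>v\<in>S. A *v f v)"
  by (induction S rule: infinite_finite_induct) (auto simp: matrix_vector_right_distrib)

lemma ofreal_smult: "(complex_of_real r) *s (x::complex^'n) = r *\<^sub>R x"
  by (simp add: vec_eq_iff cscale)

lemma expand_quad:
  fixes A :: "complex^'n^'n"
  assumes h: "hermitian A"
  shows "Re (ip (x + of_real t *s y) (A *v (x + of_real t *s y))) =
     Re (ip x (A *v x)) + 2 * t * Re (ip y (A *v x)) + t\<^sup>2 * Re (ip y (A *v y))"
proof -
  have xy: "ip x (A *v y) = cnj (ip y (A *v x))"
    by (simp add: ip_herm[OF h] ip_cnj)
  show ?thesis
    by (simp add: matrix_vector_right_distrib mv_scale ip_add_l ip_add_r ip_scale_l ip_scale_r xy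
        power2_eq_square algebra_simps)
qed

lemma expand_norm:
  assumes "ip x y = 0" "norm x = 1"
  shows "(norm (x + of_real t *s y))\<^sup>2 = 1 + t\<^sup>2 * (norm y)\<^sup>2"
proof -
  have "complex_of_real ((norm (x + of_real t *s y))\<^sup>2) = ip (x + of_real t *s y) (x + of_real t *s y)"
    by (simp add: ip_self)
  also have "\<dots> = ip x x + of_real t * ip x y + of_real t * cnj (ip x y) + of_real t * of_real t * ip y y"
    by (simp add: ip_add_l ip_add_r ip_scale_l ip_scale_r ip_cnj algebra_simps)
  also have "\<dots> = complex_of_real (1 + t\<^sup>2 * (norm y)\<^sup>2)"
    using assms by (simp add: ip_self power2_eq_square)
  finally show ?thesis using of_real_eq_iff by blast
qed

lemma rayleigh_eig:
  fixes A :: "complex^'n^'n" and W :: "(complex^'n) set"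
  assumes h: "hermitian A" and cl: "closed W"
    and add: "\<forall>x\<in>W. \<forall>y\<in>W. x + y \<in> W" and sc: "\<forall>x\<in>W. \<forall>c. c *s x \<in> W"
    and inv: "\<forall>x\<in>W. A *v x \<in> W" and w: "w \<in> W" "w \<noteq> 0"
  shows "\<exists>u\<in>W. norm u = 1 \<and> (\<exists>\<mu>. A *v u = \<mu> *s u)"
proof -
  define f where "f x = Re (ip x (A *v x))" for x
  define K where "K = sphere 0 1 \<inter> W"
  have cK: "compact K" unfolding K_def using cl by (intro compact_Int_closed) auto
  have sphK: "of_real (1 / norm z) *s z \<in> K" if "z \<in> W" "z \<noteq> 0" for z
  proof -
    have "of_real (1 / norm z) *s z \<in> W" using sc that by blast
    moreover have "norm (of_real (1 / norm z) *s z) = 1" unfolding ofreal_smult using that by simp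
    ultimately show ?thesis unfolding K_def by simp
  qed
  have wK: "of_real (1 / norm w) *s w \<in> K" using sphK w by blast
  have cf: "continuous_on K f"
    unfolding f_def using cont_ip2[of A]
    by (intro continuous_intros) (auto intro: continuous_on_subset)
  obtain x where xK: "x \<in> K" and xmax: "\<forall>y\<in>K. f y \<le> f x"
    using continuous_attains_sup[OF cK _ cf] wK by blast
  have xW: "x \<in> W" and nx: "norm x = 1" using xK unfolding K_def by auto
  have fhom: "f (of_real r *s z) = r\<^sup>2 * f z" for r z
    unfolding f_def by (simp add: mv_scale ip_scale_l ip_scale_r power2_eq_square)
  have bound: "f z \<le> f x * (norm z)\<^sup>2" if zW: "z \<in> W" for z
  proof (cases "z = 0")
    case True then show ?thesis by (simp add: f_def)
  next
    case False
    have "of_real (1 / norm z) *s z \<in> K" using sphK zW False by blast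
    then have "f (of_real (1 / norm z) *s z) \<le> f x" using xmax by blast
    then have "f z / (norm z)\<^sup>2 \<le> f x" unfolding fhom by (simp add: power_divide)
    then show ?thesis using False by (simp add: divide_le_eq mult.commute)
  qed
  have orth0: "Re (ip y (A *v x)) = 0" if yW: "y \<in> W" and xy: "ip x y = 0" for y
  proof -
    have "2 * t * Re (ip y (A *v x)) + t\<^sup>2 * (f y - f x * (norm y)\<^sup>2) \<le> 0" for t
    proof -
      have zW: "x + of_real t *s y \<in> W" using add sc xW yW by blast
      have "f (x + of_real t *s y) \<le> f x * (norm (x + of_real t *s y))\<^sup>2" by (rule bound[OF zW])
      then show ?thesis
        unfolding expand_norm[OF xy nx] using expand_quad[OF h, of x t y] unfolding f_def
        by (simp add: algebra_simps)
    qed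
    then show ?thesis by (intro quad_nonpos_lin0) auto
  qed
  have orth: "ip y (A *v x) = 0" if yW: "y \<in> W" and xy: "ip x y = 0" for y
  proof -
    have r: "Re (ip y (A *v x)) = 0" by (rule orth0[OF yW xy])
    have "\<i> *s y \<in> W" using sc yW by blast
    moreover have "ip x (\<i> *s y) = 0" using xy by (simp add: ip_scale_r)
    ultimately have "Re (ip (\<i> *s y) (A *v x)) = 0" by (rule orth0)
    then have "Im (ip y (A *v x)) = 0" by (simp add: ip_scale_l)
    with r show ?thesis by (simp add: complex_eq_iff)
  qed
  have ixx: "ip x x = 1" using nx by (simp add: ip_self)
  define y0 where "y0 = A *v x - ip x (A *v x) *s x"
  have "y0 = A *v x + (- ip x (A *v x)) *s x" by (simp add: y0_def vec_eq_iff)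
  then have y0W: "y0 \<in> W" using add sc inv xW by metis
  have xy0: "ip x y0 = 0" unfolding y0_def by (simp add: ip_diff_r ip_scale_r ixx)
  have "ip y0 y0 = ip y0 (A *v x - ip x (A *v x) *s x)" by (simp add: y0_def)
  also have "\<dots> = ip y0 (A *v x) - ip x (A *v x) * ip y0 x"
    by (simp only: ip_diff_r ip_scale_r)
  finally have "ip y0 y0 = ip y0 (A *v x) - ip x (A *v x) * ip y0 x" .
  also have "\<dots> = 0" using orth[OF y0W xy0] xy0 by (simp add: ip_cnj[symmetric, of x y0])
  finally have "y0 = 0" by (simp add: ip_self_zero)
  then have "A *v x = ip x (A *v x) *s x" by (simp add: y0_def)
  then show ?thesis using xW nx by blast
qed

definition oeig :: "complex^'n^'n \<Rightarrow> (complex^'n) set \<Rightarrow> bool" where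
  "oeig A S \<longleftrightarrow> finite S \<and> (\<forall>v\<in>S. norm v = 1 \<and> (\<exists>\<mu>. A *v v = \<mu> *s v)) \<and>
     (\<forall>v\<in>S. \<forall>w\<in>S. v \<noteq> w \<longrightarrow> ip v w = 0)"

lemma ip_unit: "norm v = 1 \<Longrightarrow> ip v v = 1"
  by (simp add: ip_self)

lemma ip_sum_expand:
  assumes "oeig A S" "w \<in> S"
  shows "ip w (\<Sum>v\<in>S. c v *s v) = c w"
proof -
  have "ip w (\<Sum>v\<in>S. c v *s v) = (\<Sum>v\<in>S. c v * ip w v)" by (simp add: ip_sum_r ip_scale_r)
  also have "\<dots> = c w * ip w w + (\<Sum>v\<in>S - {w}. c v * ip w v)"
    using assms unfolding oeig_def by (subst sum.remove[of _ w]) auto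
  also have "(\<Sum>v\<in>S - {w}. c v * ip w v) = 0"
    using assms unfolding oeig_def by (intro sum.neutral) auto
  also have "c w * ip w w + 0 = c w * ip w w" by simp
  also have "\<dots> = c w" using assms unfolding oeig_def by (simp add: ip_unit)
  finally show ?thesis .
qed

lemma oeig_card: "oeig A S \<Longrightarrow> card S \<le> CARD('n)" for A :: "complex^'n^'n"
proof -
  assume o: "oeig A S"
  have "vec.independent S"
    unfolding vec.independent_explicit
  proof (intro conjI allI impI ballI)
    show "finite S" using o oeig_def by blast
    fix c v assume s: "(\<Sum>v\<in>S. c v *s v) = 0" and v: "v \<in> S"
    have "c v = ip v (\<Sum>v\<in>S. c v *s v)" using ip_sum_expand[OF o v] by simp
    then show "c v = 0" using s by simp
  qed
  then have "card S \<le> vec.dim S" using vec.independent_bound_general by blast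
  also have "\<dots> \<le> CARD('n)" by (rule dim_subset_UNIV_cart_gen)
  finally show ?thesis .
qed

lemma oeig_complete_exists:
  fixes A :: "complex^'n^'n"
  assumes h: "hermitian A"
  shows "\<exists>S. oeig A S \<and> (\<forall>x. x = (\<Sum>v\<in>S. ip v x *s v))"
proof -
  have "oeig A {}" unfolding oeig_def by simp
  then obtain S where oS: "oeig A S" and mx: "\<forall>T. oeig A T \<longrightarrow> card T \<le> card S"
    using Lattices_Big.ex_has_greatest_nat[of "oeig A" "{}" card "CARD('n) + 1"] oeig_card
    by (metis less_Suc_eq_le Suc_eq_plus1)
  have fS: "finite S" using oS oeig_def by blast
  define W where "W = {x. \<forall>v\<in>S. ip v x = 0}"
  have W0: "W = {0}"
  proof (rule ccontr)
    assume "W \<noteq> {0}"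
    moreover have "0 \<in> W" unfolding W_def by simp
    ultimately obtain w where w: "w \<in> W" "w \<noteq> 0" by blast
    have cl: "closed W"
    proof -
      have "W = (\<Inter>v\<in>S. (\<lambda>x. ip v x) -` {0})" unfolding W_def by auto
      then show ?thesis using cont_ip by (auto intro!: closed_INT closed_vimage)
    qed
    have add: "\<forall>x\<in>W. \<forall>y\<in>W. x + y \<in> W" unfolding W_def by (simp add: ip_add_r)
    have sc: "\<forall>x\<in>W. \<forall>c. c *s x \<in> W" unfolding W_def by (simp add: ip_scale_r)
    have inv: "\<forall>x\<in>W. A *v x \<in> W"
    proof (intro ballI)
      fix x assume x: "x \<in> W"
      show "A *v x \<in> W" unfolding W_def
      proof (intro CollectI ballI)
        fix v assume v: "v \<in> S"
        obtain \<mu> where "A *v v = \<mu> *s v" using oS v unfolding oeig_def by blast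
        then have "ip v (A *v x) = cnj \<mu> * ip v x" by (simp add: ip_herm[OF h] ip_scale_l)
        then show "ip v (A *v x) = 0" using x v unfolding W_def by simp
      qed
    qed
    obtain u where uW: "u \<in> W" and nu: "norm u = 1" and ev: "\<exists>\<mu>. A *v u = \<mu> *s u"
      using rayleigh_eig[OF h cl add sc inv w] by blast
    have uS: "u \<notin> S"
    proof
      assume "u \<in> S"
      then have "ip u u = 0" using uW unfolding W_def by blast
      then show False using nu by (simp add: ip_unit)
    qed
    have uv: "\<forall>v\<in>S. ip v u = 0 \<and> ip u v = 0"
      using uW unfolding W_def by (metis (mono_tags) mem_Collect_eq ip_cnj complex_cnj_zero)
    have "oeig A (insert u S)"
      using oS nu ev uv fS unfolding oeig_def by auto
    then have "card (insert u S) \<le> card S" using mx by blast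
    then show False using uS fS by simp
  qed
  have "x = (\<Sum>v\<in>S. ip v x *s v)" for x
  proof -
    define y where "y = x - (\<Sum>v\<in>S. ip v x *s v)"
    have "y \<in> W" unfolding W_def y_def
      using ip_sum_expand[OF oS, of _ "\<lambda>v. ip v x"] by (simp add: ip_diff_r)
    then show ?thesis using W0 by (simp add: y_def)
  qed
  then show ?thesis using oS by blast
qed

lemma smult_assoc': "(a::'a::semigroup_mult) *s (b *s v) = (a * b) *s v"
  by (simp add: vec_eq_iff mult.assoc)

lemma posdef_sqrt_exists:
  fixes A :: "complex^'n^'n"
  assumes p: "posdef A"
  shows "\<exists>R. posdef R \<and> R ** R = A"
proof -
  have h: "hermitian A" using p posdef_def by blast
  obtain S where oS: "oeig A S" and cpl: "\<And>x. x = (\<Sum>v\<in>S. ip v x *s v)"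
    using oeig_complete_exists[OF h] by blast
  have fS: "finite S" using oS oeig_def by blast
  define lam where "lam v = Re (ip v (A *v v))" for v
  have Av: "A *v v = of_real (lam v) *s v" and lpos: "lam v > 0" if v: "v \<in> S" for v
  proof -
    obtain \<mu> where mu: "A *v v = \<mu> *s v" and nv: "norm v = 1" using oS v unfolding oeig_def by blast
    have "ip v (A *v v) = \<mu>" using nv by (simp add: mu ip_scale_r ip_unit)
    moreover have "Im (ip v (A *v v)) = 0" by (rule herm_qf_real[OF h])
    ultimately have "\<mu> = of_real (lam v)" unfolding lam_def by (simp add: complex_eq_iff)
    then show "A *v v = of_real (lam v) *s v" using mu by simp
    have "v \<noteq> 0" using nv by auto
    then show "lam v > 0" unfolding lam_def using posdef_qf[OF p] by blast
  qed
  define sq where "sq v = complex_of_real (sqrt (lam v))" for v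
  define R where "R = (\<chi> i j. \<Sum>v\<in>S. sq v * (v$i * cnj (v$j)))"
  have Rx: "R *v x = (\<Sum>v\<in>S. (sq v * ip v x) *s v)" for x
    unfolding R_def matrix_vector_mult_def ip_def
    apply (simp add: vec_eq_iff sum_component sum_distrib_left sum_distrib_right mult_ac)
    apply (intro allI)
    apply (rule sum.swap)
    done
  have RR: "R ** R = A"
  proof (subst matrix_eq, intro allI)
    fix x
    have "(R ** R) *v x = R *v (\<Sum>v\<in>S. (sq v * ip v x) *s v)"
      by (simp add: matrix_vector_mul_assoc[symmetric] Rx)
    also have "\<dots> = (\<Sum>w\<in>S. (sq w * (sq w * ip w x)) *s w)"
      unfolding Rx using ip_sum_expand[OF oS] by (intro sum.cong) auto
    also have "\<dots> = (\<Sum>w\<in>S. (of_real (lam w) * ip w x) *s w)"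
    proof (rule sum.cong[OF refl])
      fix w assume "w \<in> S"
      then have "sqrt (lam w) * sqrt (lam w) = lam w" using lpos[of w] by simp
      then have "sq w * sq w = of_real (lam w)" unfolding sq_def by (metis of_real_mult)
      then show "(sq w * (sq w * ip w x)) *s w = (of_real (lam w) * ip w x) *s w"
        by (simp add: mult.assoc[symmetric])
    qed
    also have "\<dots> = A *v (\<Sum>v\<in>S. ip v x *s v)"
      by (simp add: mv_sum mv_scale Av smult_assoc' mult.commute cong: sum.cong)
    also have "\<dots> = A *v x" using cpl[of x] by simp
    finally show "(R ** R) *v x = A *v x" .
  qed
  have hR: "hermitian R"
    by (rule hermitianI) (simp add: R_def sq_def mult.commute)
  have qR: "Re (ip x (R *v x)) > 0" if x: "x \<noteq> 0" for x
  proof -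
    obtain v where vS: "v \<in> S" and ne: "ip v x \<noteq> 0"
    proof (rule ccontr)
      assume "\<not> thesis"
      then have "\<forall>v\<in>S. ip v x = 0" using that by blast
      then have "x = 0" using cpl[of x] by simp
      then show False using x by simp
    qed
    have "ip x (R *v x) = (\<Sum>v\<in>S. sq v * ip v x * ip x v)"
      unfolding Rx by (simp only: ip_sum_r ip_scale_r)
    also have "\<dots> = (\<Sum>v\<in>S. of_real (sqrt (lam v) * (norm (ip v x))\<^sup>2))"
    proof (rule sum.cong[OF refl])
      fix w
      have "ip w x * ip x w = ip w x * cnj (ip w x)" by (simp add: ip_cnj[of w x])
      also have "\<dots> = of_real ((norm (ip w x))\<^sup>2)" by (rule complex_norm_square[symmetric])
      finally have "ip w x * ip x w = of_real ((norm (ip w x))\<^sup>2)" .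
      then show "sq w * ip w x * ip x w = of_real (sqrt (lam w) * (norm (ip w x))\<^sup>2)"
        by (simp add: sq_def mult.assoc)
    qed
    finally have "Re (ip x (R *v x)) = (\<Sum>v\<in>S. sqrt (lam v) * (norm (ip v x))\<^sup>2)" by simp
    also have "\<dots> > 0"
    proof -
      have "0 < sqrt (lam v) * (norm (ip v x))\<^sup>2" using lpos[OF vS] ne by simp
      moreover have "\<forall>i\<in>S. 0 \<le> sqrt (lam i) * (norm (ip i x))\<^sup>2"
      proof
        fix i assume "i \<in> S"
        then have "0 \<le> sqrt (lam i)" using lpos[of i] by simp
        then show "0 \<le> sqrt (lam i) * (norm (ip i x))\<^sup>2" by (rule mult_nonneg_nonneg) simp
      qed
      ultimately show ?thesis by (intro sum_pos2[OF fS vS]) blast+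
    qed
    finally show ?thesis .
  qed
  have "posdef R" unfolding posdef_def qf_ip using hR qR by blast
  then show ?thesis using RR by blast
qed

lemma hpd_sqrt_props:
  fixes C :: "complex^'n^'n"
  assumes "posdef C"
  shows "posdef (hpd_sqrt C)" "hpd_sqrt C ** hpd_sqrt C = C"
proof -
  have "\<exists>!R. posdef R \<and> R ** R = C"
    using posdef_sqrt_exists[OF assms] posdef_sqrt_unique by blast
  then have "posdef (hpd_sqrt C) \<and> hpd_sqrt C ** hpd_sqrt C = C"
    unfolding hpd_sqrt_def by (rule theI')
  then show "posdef (hpd_sqrt C)" "hpd_sqrt C ** hpd_sqrt C = C" by auto
qed

lemma prod_integral:
  fixes f :: "'a::euclidean_space \<Rightarrow> complex" and g :: "'b::euclidean_space \<Rightarrow> complex"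
  assumes f: "integrable lborel f" and g: "integrable lborel g"
  shows "integrable (lborel \<Otimes>\<^sub>M lborel) (\<lambda>v. f (fst v) * g (snd v))"
    "integral\<^sup>L (lborel \<Otimes>\<^sub>M lborel) (\<lambda>v. f (fst v) * g (snd v)) = integral\<^sup>L lborel f * integral\<^sup>L lborel g"
proof -
  have fm[measurable]: "f \<in> borel_measurable lborel" using f by auto
  have gm[measurable]: "g \<in> borel_measurable lborel" using g by auto
  have m: "(\<lambda>v. f (fst v) * g (snd v)) \<in> borel_measurable (lborel \<Otimes>\<^sub>M lborel)" by measurable
  have "(\<integral>\<^sup>+v. ennreal (norm (f (fst v) * g (snd v))) \<partial>(lborel \<Otimes>\<^sub>M lborel))
      = (\<integral>\<^sup>+x. \<integral>\<^sup>+y. ennreal (norm (f x)) * ennreal (norm (g y)) \<partial>lborel \<partial>lborel)"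
    by (subst lborel.nn_integral_fst[symmetric]) (auto simp: norm_mult ennreal_mult)
  also have "\<dots> = (\<integral>\<^sup>+x. ennreal (norm (f x)) * (\<integral>\<^sup>+y. ennreal (norm (g y)) \<partial>lborel) \<partial>lborel)"
    by (subst nn_integral_cmult) auto
  also have "\<dots> = (\<integral>\<^sup>+x. ennreal (norm (f x)) \<partial>lborel) * (\<integral>\<^sup>+y. ennreal (norm (g y)) \<partial>lborel)"
    by (subst nn_integral_multc) auto
  also have "\<dots> < \<infinity>"
    using f g unfolding integrable_iff_bounded by (simp add: ennreal_mult_less_top)
  finally show int: "integrable (lborel \<Otimes>\<^sub>M lborel) (\<lambda>v. f (fst v) * g (snd v))"
    using m integrable_iff_bounded by blast
  have "integral\<^sup>L (lborel \<Otimes>\<^sub>M lborel) (\<lambda>v. f (fst v) * g (snd v))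
      = (\<integral>x. (\<integral>y. f x * g y \<partial>lborel) \<partial>lborel)"
    using lborel_pair.integral_fst'[OF int] by simp
  also have "\<dots> = integral\<^sup>L lborel f * integral\<^sup>L lborel g" by simp
  finally show "integral\<^sup>L (lborel \<Otimes>\<^sub>M lborel) (\<lambda>v. f (fst v) * g (snd v)) = integral\<^sup>L lborel f * integral\<^sup>L lborel g" .
qed

lemma frech_eq: "(f has_derivative f') (at x) \<Longrightarrow> frechet_derivative f (at x) = f'"
  by (meson differentiableI frechet_derivative_works has_derivative_unique)

lemma has_derivative_nth[derivative_intros]:
  "(f has_derivative f') F \<Longrightarrow> ((\<lambda>x. f x $ i) has_derivative (\<lambda>x. f' x $ i)) F"
  using bounded_linear.has_derivative[OF bounded_linear_vec_nth] by blast

lemma lin_decomp: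
  fixes D :: "complex \<Rightarrow> real"
  assumes "linear D"
  shows "D z = Re z * D 1 + Im z * D \<i>"
proof -
  have "z = Re z *\<^sub>R 1 + Im z *\<^sub>R \<i>" by (simp add: complex_eq_iff)
  then have "D z = D (Re z *\<^sub>R 1 + Im z *\<^sub>R \<i>)" by simp
  also have "\<dots> = Re z * D 1 + Im z * D \<i>"
    using assms by (simp add: linear_add linear_scale)
  finally show ?thesis .
qed

lemma lin_decomp_axis:
  fixes D :: "complex^'n \<Rightarrow> real"
  assumes "linear D"
  shows "D (c *s axis k 1) = Re c * D (axis k 1) + Im c * D (axis k \<i>)"
proof -
  have "c *s axis k 1 = Re c *\<^sub>R axis k 1 + Im c *\<^sub>R (axis k \<i> :: complex^'n)"
    by (simp add: vec_eq_iff axis_def complex_eq_iff)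
  then have "D (c *s axis k 1) = D (Re c *\<^sub>R axis k 1 + Im c *\<^sub>R (axis k \<i> :: complex^'n))" by simp
  also have "\<dots> = Re c * D (axis k 1) + Im c * D (axis k \<i>)"
    using assms by (simp add: linear_add linear_scale)
  finally show ?thesis .
qed

lemma cwirt_of_real:
  fixes p :: "complex \<Rightarrow> real"
  assumes "p differentiable (at s)"
  shows "cwirt (\<lambda>t. complex_of_real (p t)) s =
    (of_real (frechet_derivative p (at s) 1) + \<i> * of_real (frechet_derivative p (at s) \<i>)) / 2"
proof -
  have d: "(p has_derivative frechet_derivative p (at s)) (at s)"
    using assms frechet_derivative_works by blast
  have "((\<lambda>t. complex_of_real (p t)) has_derivative (\<lambda>h. of_real (frechet_derivative p (at s) h))) (at s)"
    using has_derivative_of_real[OF d] by simp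
  then have fe: "frechet_derivative (\<lambda>t. complex_of_real (p t)) (at s) = (\<lambda>h. of_real (frechet_derivative p (at s) h))"
    by (rule frech_eq)
  show ?thesis unfolding cwirt_def fe ..
qed

lemma cwirt_ln:
  fixes p :: "complex \<Rightarrow> real"
  assumes "p differentiable (at s)" "p s > 0"
  shows "cwirt (\<lambda>t. complex_of_real (ln (p t))) s =
    (of_real (frechet_derivative p (at s) 1) + \<i> * of_real (frechet_derivative p (at s) \<i>)) / (2 * of_real (p s))"
proof -
  have d: "(p has_derivative frechet_derivative p (at s)) (at s)"
    using assms frechet_derivative_works by blast
  have "((\<lambda>t. ln (p t)) has_derivative (\<lambda>h. frechet_derivative p (at s) h * inverse (p s))) (at s)"
    by (rule has_derivative_ln[OF assms(2) d])
  then have "((\<lambda>t. complex_of_real (ln (p t))) has_derivative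
      (\<lambda>h. of_real (frechet_derivative p (at s) h * inverse (p s)))) (at s)"
    using has_derivative_of_real by blast
  then have fe: "frechet_derivative (\<lambda>t. complex_of_real (ln (p t))) (at s) =
      (\<lambda>h. of_real (frechet_derivative p (at s) h * inverse (p s)))"
    by (rule frech_eq)
  show ?thesis unfolding cwirt_def fe using assms(2)
    by (simp add: divide_simps)
qed

lemma vwirt_of_real:
  fixes p :: "complex^'n \<Rightarrow> real"
  assumes "p differentiable (at z)"
  shows "vwirt (\<lambda>t. complex_of_real (p t)) z = (\<chi> k.
    (of_real (frechet_derivative p (at z) (axis k 1)) + \<i> * of_real (frechet_derivative p (at z) (axis k \<i>))) / 2)"
proof -
  have d: "(p has_derivative frechet_derivative p (at z)) (at z)"
    using assms frechet_derivative_works by blast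
  have "((\<lambda>t. complex_of_real (p t)) has_derivative (\<lambda>h. of_real (frechet_derivative p (at z) h))) (at z)"
    using has_derivative_of_real[OF d] by simp
  then have fe: "frechet_derivative (\<lambda>t. complex_of_real (p t)) (at z) = (\<lambda>h. of_real (frechet_derivative p (at z) h))"
    by (rule frech_eq)
  show ?thesis unfolding vwirt_def fe ..
qed

lemma vwirt_ln:
  fixes p :: "complex^'n \<Rightarrow> real"
  assumes "p differentiable (at z)" "p z > 0"
  shows "vwirt (\<lambda>t. complex_of_real (ln (p t))) z = (\<chi> k.
    (of_real (frechet_derivative p (at z) (axis k 1)) + \<i> * of_real (frechet_derivative p (at z) (axis k \<i>))) / (2 * of_real (p z)))"
proof -
  have d: "(p has_derivative frechet_derivative p (at z)) (at z)"
    using assms frechet_derivative_works by blast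
  have "((\<lambda>t. ln (p t)) has_derivative (\<lambda>h. frechet_derivative p (at z) h * inverse (p z))) (at z)"
    by (rule has_derivative_ln[OF assms(2) d])
  then have "((\<lambda>t. complex_of_real (ln (p t))) has_derivative
      (\<lambda>h. of_real (frechet_derivative p (at z) h * inverse (p z)))) (at z)"
    using has_derivative_of_real by blast
  then have fe: "frechet_derivative (\<lambda>t. complex_of_real (ln (p t))) (at z) =
      (\<lambda>h. of_real (frechet_derivative p (at z) h * inverse (p z)))"
    by (rule frech_eq)
  show ?thesis unfolding vwirt_def fe using assms(2)
    by (simp add: vec_eq_iff divide_simps)
qed

lemma hpart_param[simp]: "hpart (param h g) = h" unfolding hpart_def param_def by (simp add: vec_eq_iff)
lemma gpart_param[simp]: "gpart (param h g) = g" unfolding gpart_def param_def by (simp add: vec_eq_iff)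
lemma hpart_axis_l[simp]: "hpart (axis (Inl k) c) = axis k c" unfolding hpart_def axis_def by (simp add: vec_eq_iff)
lemma gpart_axis_l[simp]: "gpart (axis (Inl k) c) = 0" unfolding gpart_def axis_def by (simp add: vec_eq_iff)
lemma hpart_axis_r[simp]: "hpart (axis (Inr k) c) = 0" unfolding hpart_def axis_def by (simp add: vec_eq_iff)
lemma gpart_axis_r[simp]: "gpart (axis (Inr k) c) = axis k c" unfolding gpart_def axis_def by (simp add: vec_eq_iff)
lemma hH_zero[simp]: "hH 0 y = 0" unfolding hH_def by simp
lemma hH_axis[simp]: "hH (axis k c) y = cnj c * y $ k"
  unfolding hH_def axis_def by (simp add: if_distrib if_distribR sum.delta cong: if_cong)

lemma wf_deriv:
  fixes g :: "complex^'n"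
  shows "((\<lambda>t. wHx (hpart t) (gpart t) (x1, x2)) has_derivative (\<lambda>dt. hH (hpart dt) (x2 - x1 *s g))) (at (param 0 g))"
proof -
  have "((\<lambda>t. (1 - (\<Sum>i\<in>UNIV. cnj (t $ Inl i) * t $ Inr i)) * x1 + (\<Sum>i\<in>UNIV. cnj (t $ Inl i) * x2 $ i))
      has_derivative (\<lambda>dt. (- (\<Sum>i\<in>UNIV. cnj (dt $ Inl i) * (param 0 g) $ Inr i + cnj ((param 0 g) $ Inl i) * dt $ Inr i)) * x1
         + (\<Sum>i\<in>UNIV. cnj (dt $ Inl i) * x2 $ i))) (at (param 0 g))"
    by (auto intro!: derivative_eq_intros simp: algebra_simps)
  moreover have "(\<lambda>dt. (- (\<Sum>i\<in>UNIV. cnj (dt $ Inl i) * (param 0 g) $ Inr i + cnj ((param 0 g) $ Inl i) * dt $ Inr i)) * x1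
         + (\<Sum>i\<in>UNIV. cnj (dt $ Inl i) * x2 $ i)) = (\<lambda>dt. hH (hpart dt) (x2 - x1 *s g))"
    by (rule ext) (simp add: param_def hH_def hpart_def algebra_simps sum_distrib_right sum_distrib_left sum_subtractf)
  ultimately show ?thesis
    unfolding wHx_def hH_def hpart_def gpart_def by simp
qed

lemma bf_deriv:
  fixes t0 :: "complex^('n::finite + 'n)" and x2 :: "complex^'n"
  shows "((\<lambda>t. Bx (gpart t) (x1, x2)) has_derivative (\<lambda>dt. x1 *s gpart dt)) (at t0)"
proof -
  have bl: "bounded_linear (\<lambda>dt::complex^('n + 'n). x1 *s gpart dt)"
    unfolding linear_conv_bounded_linear[symmetric]
    by (intro linearI) (simp_all add: gpart_def vec_eq_iff algebra_simps cscale)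
  have "((\<lambda>t. x1 *s gpart t - x2) has_derivative (\<lambda>dt. x1 *s gpart dt)) (at t0)"
  proof -
    have "((\<lambda>t. x1 *s gpart t) has_derivative (\<lambda>dt. x1 *s gpart dt)) (at t0)"
      by (rule bounded_linear.has_derivative[OF bl has_derivative_ident])
    then show ?thesis by (auto intro!: derivative_eq_intros)
  qed
  then show ?thesis unfolding Bx_def by simp
qed

lemma mixA0: "mixA 0 g (s, z) = (s, s *s g - z)"
  unfolding mixA_def by (simp add: vec_eq_iff)

lemma smult_axis_i: "s *s axis i \<i> = (s * \<i>) *s (axis i 1 :: complex^'n)"
  by (simp add: vec_eq_iff axis_def)

lemma score_s_eq:
  assumes "ps differentiable (at s)" "ps s > 0"
  shows "score_s ps s = - ((of_real (frechet_derivative ps (at s) 1) + \<i> * of_real (frechet_derivative ps (at s) \<i>)) / (2 * of_real (ps s)))"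
  unfolding score_s_def cwirt_ln[OF assms] ..

lemma score_z_eq:
  assumes "pz differentiable (at z)" "pz z > 0"
  shows "score_z pz z $ k = - ((of_real (frechet_derivative pz (at z) (axis k 1)) + \<i> * of_real (frechet_derivative pz (at z) (axis k \<i>))) / (2 * of_real (pz z)))"
  unfolding score_z_def vwirt_ln[OF assms] by simp

lemma score_theta_eq:
  fixes ps :: "complex \<Rightarrow> real" and pz :: "complex^'n \<Rightarrow> real" and g :: "complex^'n"
  assumes psd: "ps differentiable (at s)" and pzd: "pz differentiable (at z)"
    and psp: "ps s > 0" and pzp: "pz z > 0"
  shows "score_theta ps pz (param 0 g) (mixA 0 g (s, z)) $ Inl i = cnj (score_s ps s) * z $ i"
    "score_theta ps pz (param 0 g) (mixA 0 g (s, z)) $ Inr i = - cnj s * score_z pz z $ i"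
proof -
  define t0 :: "complex^('n + 'n)" where "t0 = param 0 g"
  define x2 where "x2 = s *s g - z"
  define Dps where "Dps = frechet_derivative ps (at s)"
  define Dpz where "Dpz = frechet_derivative pz (at z)"
  have dps: "(ps has_derivative Dps) (at s)" using psd frechet_derivative_works Dps_def by blast
  have dpz: "(pz has_derivative Dpz) (at z)" using pzd frechet_derivative_works Dpz_def by blast
  have lps: "linear Dps" using psd linear_frechet_derivative Dps_def by blast
  have lpz: "linear Dpz" using pzd linear_frechet_derivative Dpz_def by blast
  have w0: "wHx (hpart t0) (gpart t0) (s, x2) = s" by (simp add: t0_def wHx_def)
  have b0: "Bx (gpart t0) (s, x2) = z" by (simp add: t0_def Bx_def x2_def)
  have xz: "x2 - s *s g = - z" by (simp add: x2_def)
  have dw: "((\<lambda>t. wHx (hpart t) (gpart t) (s, x2)) has_derivative (\<lambda>dt. hH (hpart dt) (- z))) (at t0)"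
    using wf_deriv[of s x2 g] unfolding xz t0_def .
  have db: "((\<lambda>t. Bx (gpart t) (s, x2)) has_derivative (\<lambda>dt. s *s gpart dt)) (at t0)"
    by (rule bf_deriv)
  have d1: "((\<lambda>t. ps (wHx (hpart t) (gpart t) (s, x2))) has_derivative (\<lambda>dt. Dps (hH (hpart dt) (- z)))) (at t0)"
    using has_derivative_compose[OF dw, of ps Dps] dps w0 by simp
  have d2: "((\<lambda>t. pz (Bx (gpart t) (s, x2))) has_derivative (\<lambda>dt. Dpz (s *s gpart dt))) (at t0)"
    using has_derivative_compose[OF db, of pz Dpz] dpz b0 by simp
  have d1l: "((\<lambda>t. ln (ps (wHx (hpart t) (gpart t) (s, x2)))) has_derivative (\<lambda>dt. Dps (hH (hpart dt) (- z)) * inverse (ps s))) (at t0)"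
    using has_derivative_ln[OF _ d1] psp w0 by simp
  have d2l: "((\<lambda>t. ln (pz (Bx (gpart t) (s, x2)))) has_derivative (\<lambda>dt. Dpz (s *s gpart dt) * inverse (pz z))) (at t0)"
    using has_derivative_ln[OF _ d2] pzp b0 by simp
  define DL where "DL dt = complex_of_real (Dps (hH (hpart dt) (- z)) * inverse (ps s) + Dpz (s *s gpart dt) * inverse (pz z))" for dt
  have dL: "((\<lambda>t. complex_of_real (loglik ps pz (hpart t) (gpart t) (s, x2))) has_derivative DL) (at t0)"
    unfolding loglik_def DL_def by (rule has_derivative_of_real[OF has_derivative_add[OF d1l d2l]])
  have fe: "frechet_derivative (\<lambda>t. complex_of_real (loglik ps pz (hpart t) (gpart t) (s, x2))) (at t0) = DL"
    by (rule frech_eq[OF dL])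
  have st: "score_theta ps pz (param 0 g) (mixA 0 g (s, z)) = (\<chi> k. (DL (axis k 1) + \<i> * DL (axis k \<i>)) / 2)"
    unfolding score_theta_def mixA0 x2_def[symmetric] t0_def[symmetric] vwirt_def fe ..
  have D0: "Dpz 0 = 0" "Dps 0 = 0" using lps lpz by (simp_all add: linear_0)
  show "score_theta ps pz (param 0 g) (mixA 0 g (s, z)) $ Inl i = cnj (score_s ps s) * z $ i"
    unfolding st score_s_eq[OF psd psp] Dps_def[symmetric]
    using psp
    by (simp add: DL_def D0 lin_decomp[OF lps, of "- z $ i"] lin_decomp[OF lps, of "\<i> * z $ i"]
        complex_eq_iff field_simps)
  show "score_theta ps pz (param 0 g) (mixA 0 g (s, z)) $ Inr i = - cnj s * score_z pz z $ i"
    unfolding st score_z_eq[OF pzd pzp] Dpz_def[symmetric]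
    using pzp
    by (simp add: DL_def D0 smult_axis_i lin_decomp_axis[OF lpz, of s] lin_decomp_axis[OF lpz, of "s * \<i>"] lin_decomp_axis[OF lpz, of "\<i> * s"]
        complex_eq_iff field_simps)
qed

lemma cont_meas: "continuous_on UNIV f \<Longrightarrow> f \<in> borel_measurable lborel"
  using borel_measurable_continuous_onI by (simp add: measurable_lborel1)

lemma Ev_prod:
  fixes ps :: "complex \<Rightarrow> real" and pz :: "complex^'n \<Rightarrow> real"
  assumes "integrable lborel (\<lambda>s. complex_of_real (ps s) * a s)"
    "integrable lborel (\<lambda>z. complex_of_real (pz z) * b z)"
  shows "Ev ps pz (\<lambda>v. a (fst v) * b (snd v)) =
    integral\<^sup>L lborel (\<lambda>s. complex_of_real (ps s) * a s) * integral\<^sup>L lborel (\<lambda>z. complex_of_real (pz z) * b z)"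
proof -
  have "Ev ps pz (\<lambda>v. a (fst v) * b (snd v)) = integral\<^sup>L (lborel \<Otimes>\<^sub>M lborel)
      (\<lambda>v. (complex_of_real (ps (fst v)) * a (fst v)) * (complex_of_real (pz (snd v)) * b (snd v)))"
    unfolding Ev_def by (simp add: mult_ac)
  also have "\<dots> = integral\<^sup>L lborel (\<lambda>s. complex_of_real (ps s) * a s) * integral\<^sup>L lborel (\<lambda>z. complex_of_real (pz z) * b z)"
    by (rule prod_integral(2)[OF assms])
  finally show ?thesis .
qed

lemma cwirt_mult_ps:
  fixes ps :: "complex \<Rightarrow> real" and f :: "complex \<Rightarrow> complex"
  assumes psd: "ps differentiable (at s)" and fd: "(f has_derivative f') (at s)"
  shows "cwirt (\<lambda>t. f t * complex_of_real (ps t)) s =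
     f s * cwirt (\<lambda>t. complex_of_real (ps t)) s + of_real (ps s) * (f' 1 + \<i> * f' \<i>) / 2"
proof -
  define D where "D = frechet_derivative ps (at s)"
  have d: "(ps has_derivative D) (at s)" using psd frechet_derivative_works D_def by blast
  have "((\<lambda>t. f t * complex_of_real (ps t)) has_derivative
      (\<lambda>h. f s * complex_of_real (D h) + f' h * complex_of_real (ps s))) (at s)"
    by (rule has_derivative_mult[OF fd has_derivative_of_real[OF d]])
  from frech_eq[OF this] show ?thesis
    unfolding cwirt_of_real[OF psd] D_def[symmetric] unfolding cwirt_def
    by (simp add: algebra_simps add_divide_distrib)
qed

lemma vwirt_mult_pz:
  fixes pz :: "complex^'n \<Rightarrow> real" and f :: "complex^'n \<Rightarrow> complex"
  assumes pzd: "pz differentiable (at z)" and fd: "(f has_derivative f') (at z)"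
  shows "vwirt (\<lambda>t. f t * complex_of_real (pz t)) z $ i =
     f z * vwirt (\<lambda>t. complex_of_real (pz t)) z $ i + of_real (pz z) * (f' (axis i 1) + \<i> * f' (axis i \<i>)) / 2"
proof -
  define D where "D = frechet_derivative pz (at z)"
  have d: "(pz has_derivative D) (at z)" using pzd frechet_derivative_works D_def by blast
  have "((\<lambda>t. f t * complex_of_real (pz t)) has_derivative
      (\<lambda>h. f z * complex_of_real (D h) + f' h * complex_of_real (pz z))) (at z)"
    by (rule has_derivative_mult[OF fd has_derivative_of_real[OF d]])
  from frech_eq[OF this] show ?thesis
    unfolding vwirt_of_real[OF pzd] D_def[symmetric] unfolding vwirt_def
    by (simp add: algebra_simps add_divide_distrib)
qed

lemma has_derivative_cnj_id: "(cnj has_derivative cnj) F"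
  by (rule has_derivative_cnj[OF has_derivative_ident])

lemma cwirt_cnj_ps:
  "ps differentiable (at s) \<Longrightarrow> cwirt (\<lambda>t. cnj t * complex_of_real (ps t)) s =
     cnj s * cwirt (\<lambda>t. complex_of_real (ps t)) s + of_real (ps s)"
  using cwirt_mult_ps[OF _ has_derivative_cnj_id] by simp

lemma cwirt_id_ps:
  "ps differentiable (at s) \<Longrightarrow> cwirt (\<lambda>t. t * complex_of_real (ps t)) s =
     s * cwirt (\<lambda>t. complex_of_real (ps t)) s"
  using cwirt_mult_ps[OF _ has_derivative_ident] by simp

lemma vwirt_nth_pz:
  "pz differentiable (at z) \<Longrightarrow> vwirt (\<lambda>t. t $ j * complex_of_real (pz t)) z $ i =
     z $ j * vwirt (\<lambda>t. complex_of_real (pz t)) z $ i"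
  using vwirt_mult_pz[OF _ has_derivative_nth[where i=j, OF has_derivative_ident]]
  by (simp add: axis_def)

lemma vwirt_cnj_nth_pz:
  "pz differentiable (at z) \<Longrightarrow> vwirt (\<lambda>t. cnj (t $ j) * complex_of_real (pz t)) z $ i =
     cnj (z $ j) * vwirt (\<lambda>t. complex_of_real (pz t)) z $ i + (if i = j then of_real (pz z) else 0)"
  using vwirt_mult_pz[OF _ bounded_linear.has_derivative[OF bounded_linear_cnj has_derivative_nth[where i=j, OF has_derivative_ident]]]
  by (simp add: axis_def)

locale Model =
  fixes ps :: "complex \<Rightarrow> real" and pz :: "complex^'n \<Rightarrow> real"
  assumes ps_pos: "\<forall>s. ps s > 0" and pz_pos: "\<forall>z. pz z > 0"
    and ps_int: "integrable lborel ps" and ps_one: "integral\<^sup>L lborel ps = 1"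
    and pz_int: "integrable lborel pz" and pz_one: "integral\<^sup>L lborel pz = 1"
    and ps_diff: "\<forall>s. ps differentiable (at s)"
    and ps_C1: "continuous_on UNIV (cwirt (\<lambda>t. complex_of_real (ps t)))"
    and pz_diff: "\<forall>z. pz differentiable (at z)"
    and pz_C1: "continuous_on UNIV (vwirt (\<lambda>t. complex_of_real (pz t)))"
    and s_ibp: "\<forall>f \<in> {\<lambda>t. 1, \<lambda>t. t, \<lambda>t. cnj t}.
        integrable lborel (cwirt (\<lambda>t. f t * complex_of_real (ps t)))
      \<and> integral\<^sup>L lborel (cwirt (\<lambda>t. f t * complex_of_real (ps t))) = 0"
    and z_ibp: "\<forall>i j. \<forall>f \<in> {\<lambda>t. 1, \<lambda>t. t $ j, \<lambda>t. cnj (t $ j)}.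
        integrable lborel (\<lambda>z. vwirt (\<lambda>t. f t * complex_of_real (pz t)) z $ i)
      \<and> integral\<^sup>L lborel (\<lambda>z. vwirt (\<lambda>t. f t * complex_of_real (pz t)) z $ i) = 0"
    and s_mom2: "integrable lborel (\<lambda>s. ps s * (cmod s)\<^sup>2)"
    and s_fish: "integrable lborel (\<lambda>s. ps s * (cmod (score_s ps s))\<^sup>2)"
    and z_mom2: "integrable lborel (\<lambda>z. pz z * (norm z)\<^sup>2)"
    and z_fish: "integrable lborel (\<lambda>z. pz z * (norm (score_z pz z))\<^sup>2)"
    and s_circ: "integral\<^sup>L lborel (\<lambda>s. ps s *\<^sub>R s\<^sup>2) = 0"
    and z_circ: "\<forall>i j. integral\<^sup>L lborel (\<lambda>z. pz z *\<^sub>R (z $ i * z $ j)) = 0"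
    and Cz_inv: "invertible (cov_z pz)"
begin

lemma meas_ps[measurable]: "ps \<in> borel_measurable lborel" using ps_int by auto
lemma meas_pz[measurable]: "pz \<in> borel_measurable lborel" using pz_int by auto
lemma meas_Ws[measurable]: "cwirt (\<lambda>t. complex_of_real (ps t)) \<in> borel_measurable lborel"
  using ps_C1 cont_meas by blast
lemma meas_Wz[measurable]: "vwirt (\<lambda>t. complex_of_real (pz t)) \<in> borel_measurable lborel"
  using pz_C1 cont_meas by blast
lemma meas_Wz_i[measurable]: "(\<lambda>z. vwirt (\<lambda>t. complex_of_real (pz t)) z $ i) \<in> borel_measurable lborel"
  by (rule cont_meas) (rule continuous_on_component[OF pz_C1])

lemma score_s_W: "score_s ps s = - cwirt (\<lambda>t. complex_of_real (ps t)) s / of_real (ps s)"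
proof -
  have d: "ps differentiable (at s)" and p: "ps s > 0" using ps_diff ps_pos by auto
  have e: "- (X / (2 * p)) = - (X / 2) / (p::complex)" for X p by simp
  show ?thesis unfolding score_s_eq[OF d p] cwirt_of_real[OF d] by (rule e)
qed

lemma score_z_W: "score_z pz z $ k = - vwirt (\<lambda>t. complex_of_real (pz t)) z $ k / of_real (pz z)"
proof -
  have d: "pz differentiable (at z)" and p: "pz z > 0" using pz_diff pz_pos by auto
  have e: "- (X / (2 * p)) = - (X / 2) / (p::complex)" for X p by simp
  show ?thesis unfolding score_z_eq[OF d p] vwirt_of_real[OF d] vec_lambda_beta by (rule e)
qed

lemma meas_score_s[measurable]: "score_s ps \<in> borel_measurable lborel"
proof -
  have "score_s ps = (\<lambda>s. - cwirt (\<lambda>t. complex_of_real (ps t)) s / of_real (ps s))"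
    using score_s_W by auto
  moreover have "(\<lambda>s. - cwirt (\<lambda>t. complex_of_real (ps t)) s / of_real (ps s)) \<in> borel_measurable lborel"
    by measurable
  ultimately show ?thesis by simp
qed

lemma meas_score_z[measurable]: "(\<lambda>z. score_z pz z $ k) \<in> borel_measurable lborel"
proof -
  have "(\<lambda>z. score_z pz z $ k) = (\<lambda>z. - vwirt (\<lambda>t. complex_of_real (pz t)) z $ k / of_real (pz z))"
    using score_z_W by auto
  moreover have "(\<lambda>z. - vwirt (\<lambda>t. complex_of_real (pz t)) z $ k / of_real (pz z)) \<in> borel_measurable lborel"
    by measurable
  ultimately show ?thesis by simp
qed

lemma ibp_cnj: "integrable lborel (cwirt (\<lambda>t. cnj t * complex_of_real (ps t)))"
    "integral\<^sup>L lborel (cwirt (\<lambda>t. cnj t * complex_of_real (ps t))) = 0"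
  using s_ibp by auto

lemma ibp_id: "integrable lborel (cwirt (\<lambda>t. t * complex_of_real (ps t)))"
    "integral\<^sup>L lborel (cwirt (\<lambda>t. t * complex_of_real (ps t))) = 0"
  using s_ibp by auto

lemma ibpz_nth: "integrable lborel (\<lambda>z. vwirt (\<lambda>t. t $ j * complex_of_real (pz t)) z $ i)"
    "integral\<^sup>L lborel (\<lambda>z. vwirt (\<lambda>t. t $ j * complex_of_real (pz t)) z $ i) = 0"
  using z_ibp by auto

lemma ibpz_cnj: "integrable lborel (\<lambda>z. vwirt (\<lambda>t. cnj (t $ j) * complex_of_real (pz t)) z $ i)"
    "integral\<^sup>L lborel (\<lambda>z. vwirt (\<lambda>t. cnj (t $ j) * complex_of_real (pz t)) z $ i) = 0"
  using z_ibp by auto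

lemma int_cps: "integrable lborel (\<lambda>s. complex_of_real (ps s))" "integral\<^sup>L lborel (\<lambda>s. complex_of_real (ps s)) = 1"
  using ps_int ps_one by auto
lemma int_cpz: "integrable lborel (\<lambda>z. complex_of_real (pz z))" "integral\<^sup>L lborel (\<lambda>z. complex_of_real (pz z)) = 1"
  using pz_int pz_one by auto

lemma E_psi_cs:
  shows "integrable lborel (\<lambda>s. complex_of_real (ps s) * (score_s ps s * cnj s))"
    "integral\<^sup>L lborel (\<lambda>s. complex_of_real (ps s) * (score_s ps s * cnj s)) = 1"
proof -
  have eq: "(\<lambda>s. complex_of_real (ps s) * (score_s ps s * cnj s)) =
      (\<lambda>s. complex_of_real (ps s) - cwirt (\<lambda>t. cnj t * complex_of_real (ps t)) s)"
  proof
    fix s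
    have "ps s > 0" using ps_pos by auto
    then show "complex_of_real (ps s) * (score_s ps s * cnj s) =
      complex_of_real (ps s) - cwirt (\<lambda>t. cnj t * complex_of_real (ps t)) s"
      unfolding score_s_W cwirt_cnj_ps[OF ps_diff[rule_format]] by (simp add: field_simps)
  qed
  show "integrable lborel (\<lambda>s. complex_of_real (ps s) * (score_s ps s * cnj s))"
    unfolding eq using int_cps ibp_cnj by auto
  show "integral\<^sup>L lborel (\<lambda>s. complex_of_real (ps s) * (score_s ps s * cnj s)) = 1"
    unfolding eq using int_cps ibp_cnj by (simp add: Bochner_Integration.integral_diff)
qed

lemma E_psi_s:
  shows "integrable lborel (\<lambda>s. complex_of_real (ps s) * (score_s ps s * s))"
    "integral\<^sup>L lborel (\<lambda>s. complex_of_real (ps s) * (score_s ps s * s)) = 0"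
proof -
  have eq: "(\<lambda>s. complex_of_real (ps s) * (score_s ps s * s)) =
      (\<lambda>s. - cwirt (\<lambda>t. t * complex_of_real (ps t)) s)"
  proof
    fix s
    have "ps s > 0" using ps_pos by auto
    then show "complex_of_real (ps s) * (score_s ps s * s) = - cwirt (\<lambda>t. t * complex_of_real (ps t)) s"
      unfolding score_s_W cwirt_id_ps[OF ps_diff[rule_format]] by (simp add: field_simps)
  qed
  show "integrable lborel (\<lambda>s. complex_of_real (ps s) * (score_s ps s * s))"
    unfolding eq using ibp_id by auto
  show "integral\<^sup>L lborel (\<lambda>s. complex_of_real (ps s) * (score_s ps s * s)) = 0"
    unfolding eq using ibp_id by simp
qed

lemma E_psiz_cz:
  shows "integrable lborel (\<lambda>z. complex_of_real (pz z) * (score_z pz z $ i * cnj (z $ j)))"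
    "integral\<^sup>L lborel (\<lambda>z. complex_of_real (pz z) * (score_z pz z $ i * cnj (z $ j))) = (if i = j then 1 else 0)"
proof -
  have eq: "(\<lambda>z. complex_of_real (pz z) * (score_z pz z $ i * cnj (z $ j))) =
      (\<lambda>z. (if i = j then complex_of_real (pz z) else 0) - vwirt (\<lambda>t. cnj (t $ j) * complex_of_real (pz t)) z $ i)"
  proof
    fix z
    have "pz z > 0" using pz_pos by auto
    then show "complex_of_real (pz z) * (score_z pz z $ i * cnj (z $ j)) =
      (if i = j then complex_of_real (pz z) else 0) - vwirt (\<lambda>t. cnj (t $ j) * complex_of_real (pz t)) z $ i"
      unfolding score_z_W vwirt_cnj_nth_pz[OF pz_diff[rule_format]] by (simp add: field_simps)
  qed
  have ii: "integrable lborel (\<lambda>z. if i = j then complex_of_real (pz z) else 0)"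
    using int_cpz by (cases "i = j") auto
  show "integrable lborel (\<lambda>z. complex_of_real (pz z) * (score_z pz z $ i * cnj (z $ j)))"
    unfolding eq using ii ibpz_cnj by auto
  show "integral\<^sup>L lborel (\<lambda>z. complex_of_real (pz z) * (score_z pz z $ i * cnj (z $ j))) = (if i = j then 1 else 0)"
    unfolding eq using ii ibpz_cnj int_cpz by (simp add: Bochner_Integration.integral_diff)
qed

lemma E_psiz_z:
  shows "integrable lborel (\<lambda>z. complex_of_real (pz z) * (score_z pz z $ i * z $ j))"
    "integral\<^sup>L lborel (\<lambda>z. complex_of_real (pz z) * (score_z pz z $ i * z $ j)) = 0"
proof -
  have eq: "(\<lambda>z. complex_of_real (pz z) * (score_z pz z $ i * z $ j)) =
      (\<lambda>z. - vwirt (\<lambda>t. t $ j * complex_of_real (pz t)) z $ i)"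
  proof
    fix z
    have "pz z > 0" using pz_pos by auto
    then show "complex_of_real (pz z) * (score_z pz z $ i * z $ j) = - vwirt (\<lambda>t. t $ j * complex_of_real (pz t)) z $ i"
      unfolding score_z_W vwirt_nth_pz[OF pz_diff[rule_format]] by (simp add: field_simps)
  qed
  show "integrable lborel (\<lambda>z. complex_of_real (pz z) * (score_z pz z $ i * z $ j))"
    unfolding eq using ibpz_nth by auto
  show "integral\<^sup>L lborel (\<lambda>z. complex_of_real (pz z) * (score_z pz z $ i * z $ j)) = 0"
    unfolding eq using ibpz_nth by simp
qed

end

lemma meas_nth[measurable]: "(\<lambda>z::complex^'n. z $ i) \<in> borel_measurable lborel"
  by (rule cont_meas) (intro continuous_intros)

lemma meas_cnj[measurable]: "f \<in> borel_measurable M \<Longrightarrow> (\<lambda>x. cnj (f x)) \<in> borel_measurable M"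
  by (rule measurable_compose[where g=cnj]) (auto intro: borel_measurable_continuous_onI continuous_on_cnj continuous_on_id)

lemma bnd_int:
  fixes h :: "'a::euclidean_space \<Rightarrow> complex" and p :: "'a \<Rightarrow> real" and r :: "'a \<Rightarrow> real"
  assumes i: "integrable lborel (\<lambda>x. p x * r x)" and pm: "p \<in> borel_measurable lborel"
    and hm: "h \<in> borel_measurable lborel" and p0: "\<And>x. p x \<ge> 0" and hr: "\<And>x. norm (h x) \<le> r x"
  shows "integrable lborel (\<lambda>x. complex_of_real (p x) * h x)"
proof (rule Bochner_Integration.integrable_bound[OF i])
  show "(\<lambda>x. complex_of_real (p x) * h x) \<in> borel_measurable lborel"
    using pm hm by measurable
  show "AE x in lborel. norm (complex_of_real (p x) * h x) \<le> norm (p x * r x)"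
  proof (rule AE_I2)
    fix x
    have r0: "r x \<ge> 0" using hr[of x] norm_ge_zero order_trans by blast
    have "norm (complex_of_real (p x) * h x) = p x * norm (h x)" using p0[of x] by (simp add: norm_mult)
    also have "\<dots> \<le> p x * r x" using p0[of x] hr[of x] by (simp add: mult_left_mono)
    also have "\<dots> = norm (p x * r x)" using p0[of x] r0 by simp
    finally show "norm (complex_of_real (p x) * h x) \<le> norm (p x * r x)" .
  qed
qed

context Model begin

lemma ps0: "ps s \<ge> 0" using ps_pos less_imp_le by blast
lemma pz0: "pz z \<ge> 0" using pz_pos less_imp_le by blast

lemma cs_sq: "cnj a * a = complex_of_real ((cmod a)\<^sup>2)"
  by (metis complex_norm_square mult.commute)

lemma S1: "integrable lborel (\<lambda>s. complex_of_real (ps s) * (cnj (score_s ps s) * score_s ps s))"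
    "integral\<^sup>L lborel (\<lambda>s. complex_of_real (ps s) * (cnj (score_s ps s) * score_s ps s)) = of_real (kappa_s ps)"
proof -
  have eq: "(\<lambda>s. complex_of_real (ps s) * (cnj (score_s ps s) * score_s ps s)) =
     (\<lambda>s. complex_of_real (ps s * (cmod (score_s ps s))\<^sup>2))"
    by (simp only: cs_sq of_real_mult)
  show "integrable lborel (\<lambda>s. complex_of_real (ps s) * (cnj (score_s ps s) * score_s ps s))"
    unfolding eq by (rule integrable_of_real) (rule s_fish)
  show "integral\<^sup>L lborel (\<lambda>s. complex_of_real (ps s) * (cnj (score_s ps s) * score_s ps s)) = of_real (kappa_s ps)"
    unfolding eq kappa_s_def by (rule integral_complex_of_real)
qed

lemma S4: "integrable lborel (\<lambda>s. complex_of_real (ps s) * (cnj s * s))"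
    "integral\<^sup>L lborel (\<lambda>s. complex_of_real (ps s) * (cnj s * s)) = of_real (sigma2_s ps)"
proof -
  have eq: "(\<lambda>s. complex_of_real (ps s) * (cnj s * s)) = (\<lambda>s. complex_of_real (ps s * (cmod s)\<^sup>2))"
    by (simp only: cs_sq of_real_mult)
  show "integrable lborel (\<lambda>s. complex_of_real (ps s) * (cnj s * s))"
    unfolding eq by (rule integrable_of_real) (rule s_mom2)
  show "integral\<^sup>L lborel (\<lambda>s. complex_of_real (ps s) * (cnj s * s)) = of_real (sigma2_s ps)"
    unfolding eq sigma2_s_def by (rule integral_complex_of_real)
qed

lemma S2: "integrable lborel (\<lambda>s. complex_of_real (ps s) * (- (cnj (score_s ps s) * s)))"
    "integral\<^sup>L lborel (\<lambda>s. complex_of_real (ps s) * (- (cnj (score_s ps s) * s))) = - 1"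
proof -
  have eq: "(\<lambda>s. complex_of_real (ps s) * (- (cnj (score_s ps s) * s))) =
     (\<lambda>s. - cnj (complex_of_real (ps s) * (score_s ps s * cnj s)))"
    by simp
  show "integrable lborel (\<lambda>s. complex_of_real (ps s) * (- (cnj (score_s ps s) * s)))"
    unfolding eq by (intro integrable_minus integrable_cnj E_psi_cs)
  show "integral\<^sup>L lborel (\<lambda>s. complex_of_real (ps s) * (- (cnj (score_s ps s) * s))) = - 1"
    unfolding eq Bochner_Integration.integral_minus Bochner_Integration.integral_cnj E_psi_cs(2) by simp
qed

lemma S3: "integrable lborel (\<lambda>s. complex_of_real (ps s) * (- (cnj s * score_s ps s)))"
    "integral\<^sup>L lborel (\<lambda>s. complex_of_real (ps s) * (- (cnj s * score_s ps s))) = - 1"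
proof -
  have eq: "(\<lambda>s. complex_of_real (ps s) * (- (cnj s * score_s ps s))) =
     (\<lambda>s. - (complex_of_real (ps s) * (score_s ps s * cnj s)))"
    by (simp add: mult_ac)
  show "integrable lborel (\<lambda>s. complex_of_real (ps s) * (- (cnj s * score_s ps s)))"
    unfolding eq by (intro integrable_minus E_psi_cs)
  show "integral\<^sup>L lborel (\<lambda>s. complex_of_real (ps s) * (- (cnj s * score_s ps s))) = - 1"
    unfolding eq using E_psi_cs by simp
qed

lemma S5: "integrable lborel (\<lambda>s. complex_of_real (ps s) * (cnj (score_s ps s) * cnj (score_s ps s)))"
  by (rule bnd_int[OF s_fish]) (auto simp: ps0 norm_mult power2_eq_square)

lemma S6: "integrable lborel (\<lambda>s. complex_of_real (ps s) * (- (cnj (score_s ps s) * cnj s)))"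
    "integral\<^sup>L lborel (\<lambda>s. complex_of_real (ps s) * (- (cnj (score_s ps s) * cnj s))) = 0"
proof -
  have eq: "(\<lambda>s. complex_of_real (ps s) * (- (cnj (score_s ps s) * cnj s))) =
     (\<lambda>s. - cnj (complex_of_real (ps s) * (score_s ps s * s)))"
    by simp
  show "integrable lborel (\<lambda>s. complex_of_real (ps s) * (- (cnj (score_s ps s) * cnj s)))"
    unfolding eq by (intro integrable_minus integrable_cnj E_psi_s)
  show "integral\<^sup>L lborel (\<lambda>s. complex_of_real (ps s) * (- (cnj (score_s ps s) * cnj s))) = 0"
    unfolding eq Bochner_Integration.integral_minus Bochner_Integration.integral_cnj E_psi_s(2) by simp
qed

lemma S7: "integrable lborel (\<lambda>s. complex_of_real (ps s) * (- (cnj s * cnj (score_s ps s))))"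
    "integral\<^sup>L lborel (\<lambda>s. complex_of_real (ps s) * (- (cnj s * cnj (score_s ps s)))) = 0"
  using S6 by (simp_all add: mult.commute)

lemma S8: "integrable lborel (\<lambda>s. complex_of_real (ps s) * (cnj s * cnj s))"
    "integral\<^sup>L lborel (\<lambda>s. complex_of_real (ps s) * (cnj s * cnj s)) = 0"
proof -
  show i: "integrable lborel (\<lambda>s. complex_of_real (ps s) * (cnj s * cnj s))"
    by (rule bnd_int[OF s_mom2]) (auto simp: ps0 norm_mult power2_eq_square)
  have eq: "(\<lambda>s. complex_of_real (ps s) * (cnj s * cnj s)) = (\<lambda>s. cnj (ps s *\<^sub>R s\<^sup>2))"
    by (simp add: scaleR_conv_of_real power2_eq_square)
  show "integral\<^sup>L lborel (\<lambda>s. complex_of_real (ps s) * (cnj s * cnj s)) = 0"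
    unfolding eq Bochner_Integration.integral_cnj s_circ by simp
qed

end

context Model begin

lemma nth_le: "norm (x $ i) \<le> norm (x :: complex^'n)"
  by (rule Finite_Cartesian_Product.norm_nth_le)

lemma prod_le_sq: "norm (x $ i) * norm (x $ j) \<le> (norm (x :: complex^'n))\<^sup>2"
  unfolding power2_eq_square by (intro mult_mono nth_le) auto

lemma Z1: "integrable lborel (\<lambda>z. complex_of_real (pz z) * (z $ i * cnj (z $ j)))"
    "integral\<^sup>L lborel (\<lambda>z. complex_of_real (pz z) * (z $ i * cnj (z $ j))) = cov_z pz $ i $ j"
proof -
  show "integrable lborel (\<lambda>z. complex_of_real (pz z) * (z $ i * cnj (z $ j)))"
    by (rule bnd_int[OF z_mom2]) (auto simp: pz0 norm_mult prod_le_sq)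
  show "integral\<^sup>L lborel (\<lambda>z. complex_of_real (pz z) * (z $ i * cnj (z $ j))) = cov_z pz $ i $ j"
    unfolding cov_z_def by simp
qed

lemma Z4: "integrable lborel (\<lambda>z. complex_of_real (pz z) * (score_z pz z $ i * cnj (score_z pz z $ j)))"
    "integral\<^sup>L lborel (\<lambda>z. complex_of_real (pz z) * (score_z pz z $ i * cnj (score_z pz z $ j))) = kappa_z pz $ i $ j"
proof -
  show "integrable lborel (\<lambda>z. complex_of_real (pz z) * (score_z pz z $ i * cnj (score_z pz z $ j)))"
    by (rule bnd_int[OF z_fish]) (auto simp: pz0 norm_mult prod_le_sq)
  show "integral\<^sup>L lborel (\<lambda>z. complex_of_real (pz z) * (score_z pz z $ i * cnj (score_z pz z $ j))) = kappa_z pz $ i $ j"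
    unfolding kappa_z_def by simp
qed

lemma Z8: "integrable lborel (\<lambda>z. complex_of_real (pz z) * (score_z pz z $ i * score_z pz z $ j))"
  by (rule bnd_int[OF z_fish]) (auto simp: pz0 norm_mult prod_le_sq)

lemma Z5: "integrable lborel (\<lambda>z. complex_of_real (pz z) * (z $ i * z $ j))"
    "integral\<^sup>L lborel (\<lambda>z. complex_of_real (pz z) * (z $ i * z $ j)) = 0"
proof -
  show "integrable lborel (\<lambda>z. complex_of_real (pz z) * (z $ i * z $ j))"
    by (rule bnd_int[OF z_mom2]) (auto simp: pz0 norm_mult prod_le_sq)
  have eq: "(\<lambda>z. complex_of_real (pz z) * (z $ i * z $ j)) = (\<lambda>z. pz z *\<^sub>R (z $ i * z $ j))"
    by (simp add: scaleR_conv_of_real)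
  show "integral\<^sup>L lborel (\<lambda>z. complex_of_real (pz z) * (z $ i * z $ j)) = 0"
    unfolding eq using z_circ by blast
qed

lemma Z2: "integrable lborel (\<lambda>z. complex_of_real (pz z) * (z $ i * cnj (score_z pz z $ j)))"
    "integral\<^sup>L lborel (\<lambda>z. complex_of_real (pz z) * (z $ i * cnj (score_z pz z $ j))) = (if i = j then 1 else 0)"
proof -
  have eq: "(\<lambda>z. complex_of_real (pz z) * (z $ i * cnj (score_z pz z $ j))) =
     (\<lambda>z. cnj (complex_of_real (pz z) * (score_z pz z $ j * cnj (z $ i))))"
    by (simp add: mult_ac)
  show "integrable lborel (\<lambda>z. complex_of_real (pz z) * (z $ i * cnj (score_z pz z $ j)))"
    unfolding eq by (intro integrable_cnj E_psiz_cz)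
  show "integral\<^sup>L lborel (\<lambda>z. complex_of_real (pz z) * (z $ i * cnj (score_z pz z $ j))) = (if i = j then 1 else 0)"
    unfolding eq Bochner_Integration.integral_cnj E_psiz_cz(2) by auto
qed

lemma Z3: "integrable lborel (\<lambda>z. complex_of_real (pz z) * (score_z pz z $ i * cnj (z $ j)))"
    "integral\<^sup>L lborel (\<lambda>z. complex_of_real (pz z) * (score_z pz z $ i * cnj (z $ j))) = (if i = j then 1 else 0)"
  using E_psiz_cz by auto

lemma Z6: "integrable lborel (\<lambda>z. complex_of_real (pz z) * (z $ i * score_z pz z $ j))"
  using E_psiz_z(1)[of j i] by (simp add: mult.commute)

lemma Z7: "integrable lborel (\<lambda>z. complex_of_real (pz z) * (score_z pz z $ i * z $ j))"
  using E_psiz_z(1) by auto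

end

context Model begin

lemma u_l: "score_theta ps pz (param 0 g) (mixA 0 g v) $ Inl i = cnj (score_s ps (fst v)) * snd v $ i"
  using ps_diff pz_diff ps_pos pz_pos by (cases v) (simp add: score_theta_eq)

lemma u_r: "score_theta ps pz (param 0 g) (mixA 0 g v) $ Inr i = - cnj (fst v) * score_z pz (snd v) $ i"
  using ps_diff pz_diff ps_pos pz_pos by (cases v) (simp add: score_theta_eq)

lemma F_eq: "fisherF ps pz (param 0 g) $ a $ b = Ev ps pz (\<lambda>v.
    score_theta ps pz (param 0 g) (mixA 0 g v) $ a * cnj (score_theta ps pz (param 0 g) (mixA 0 g v) $ b))"
  unfolding fisherF_def by (simp add: Let_def)

lemma P_eq: "fisherP ps pz (param 0 g) $ a $ b = Ev ps pz (\<lambda>v.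
    score_theta ps pz (param 0 g) (mixA 0 g v) $ a * score_theta ps pz (param 0 g) (mixA 0 g v) $ b)"
  unfolding fisherP_def by (simp add: Let_def)

lemma F_ll: "fisherF ps pz (param 0 g) $ Inl i $ Inl j = of_real (kappa_s ps) * cov_z pz $ i $ j"
proof -
  have "fisherF ps pz (param 0 g) $ Inl i $ Inl j = Ev ps pz (\<lambda>v.
      (cnj (score_s ps (fst v)) * score_s ps (fst v)) * (snd v $ i * cnj (snd v $ j)))"
    unfolding F_eq u_l by (simp add: mult_ac)
  also have "\<dots> = of_real (kappa_s ps) * cov_z pz $ i $ j"
    using Ev_prod[OF S1(1) Z1(1)] S1(2) Z1(2) by simp
  finally show ?thesis .
qed

lemma F_lr: "fisherF ps pz (param 0 g) $ Inl i $ Inr j = (if i = j then - 1 else 0)"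
proof -
  have "fisherF ps pz (param 0 g) $ Inl i $ Inr j = Ev ps pz (\<lambda>v.
      (- (cnj (score_s ps (fst v)) * fst v)) * (snd v $ i * cnj (score_z pz (snd v) $ j)))"
    unfolding F_eq u_l u_r by (simp add: mult_ac)
  also have "\<dots> = (if i = j then - 1 else 0)"
    using Ev_prod[OF S2(1) Z2(1)] S2(2) Z2(2) by simp
  finally show ?thesis .
qed

lemma F_rl: "fisherF ps pz (param 0 g) $ Inr i $ Inl j = (if i = j then - 1 else 0)"
proof -
  have "fisherF ps pz (param 0 g) $ Inr i $ Inl j = Ev ps pz (\<lambda>v.
      (- (cnj (fst v) * score_s ps (fst v))) * (score_z pz (snd v) $ i * cnj (snd v $ j)))"
    unfolding F_eq u_l u_r by (simp add: mult_ac)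
  also have "\<dots> = (if i = j then - 1 else 0)"
    using Ev_prod[OF S3(1) Z3(1)] S3(2) Z3(2) by simp
  finally show ?thesis .
qed

lemma F_rr: "fisherF ps pz (param 0 g) $ Inr i $ Inr j = of_real (sigma2_s ps) * kappa_z pz $ i $ j"
proof -
  have "fisherF ps pz (param 0 g) $ Inr i $ Inr j = Ev ps pz (\<lambda>v.
      (cnj (fst v) * fst v) * (score_z pz (snd v) $ i * cnj (score_z pz (snd v) $ j)))"
    unfolding F_eq u_r by (simp add: mult_ac)
  also have "\<dots> = of_real (sigma2_s ps) * kappa_z pz $ i $ j"
    using Ev_prod[OF S4(1) Z4(1)] S4(2) Z4(2) by simp
  finally show ?thesis .
qed

lemma P_zero: "fisherP ps pz (param 0 g) $ a $ b = 0"
proof (cases a; cases b)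
  fix i j assume [simp]: "a = Inl i" "b = Inl j"
  have "fisherP ps pz (param 0 g) $ a $ b = Ev ps pz (\<lambda>v.
      (cnj (score_s ps (fst v)) * cnj (score_s ps (fst v))) * (snd v $ i * snd v $ j))"
    unfolding P_eq by (simp add: u_l mult_ac)
  also have "\<dots> = 0" using Ev_prod[OF S5 Z5(1)] Z5(2) by simp
  finally show ?thesis .
next
  fix i j assume [simp]: "a = Inl i" "b = Inr j"
  have "fisherP ps pz (param 0 g) $ a $ b = Ev ps pz (\<lambda>v.
      (- (cnj (score_s ps (fst v)) * cnj (fst v))) * (snd v $ i * score_z pz (snd v) $ j))"
    unfolding P_eq by (simp add: u_l u_r mult_ac)
  also have "\<dots> = 0" using Ev_prod[OF S6(1) Z6] S6(2) by simp
  finally show ?thesis .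
next
  fix i j assume [simp]: "a = Inr i" "b = Inl j"
  have "fisherP ps pz (param 0 g) $ a $ b = Ev ps pz (\<lambda>v.
      (- (cnj (fst v) * cnj (score_s ps (fst v)))) * (score_z pz (snd v) $ i * snd v $ j))"
    unfolding P_eq by (simp add: u_l u_r mult_ac)
  also have "\<dots> = 0" using Ev_prod[OF S7(1) Z7] S7(2) by simp
  finally show ?thesis .
next
  fix i j assume [simp]: "a = Inr i" "b = Inr j"
  have "fisherP ps pz (param 0 g) $ a $ b = Ev ps pz (\<lambda>v.
      (cnj (fst v) * cnj (fst v)) * (score_z pz (snd v) $ i * score_z pz (snd v) $ j))"
    unfolding P_eq by (simp add: u_r mult_ac)
  also have "\<dots> = 0" using Ev_prod[OF S8(1) Z8] S8(2) by simp
  finally show ?thesis .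
qed

end

lemma gram_qf:
  fixes pz :: "complex^'n \<Rightarrow> real" and w :: "'n \<Rightarrow> complex^'n \<Rightarrow> complex" and M :: "complex^'n^'n"
  assumes int: "\<And>i j. integrable lborel (\<lambda>z. complex_of_real (pz z) * (w i z * cnj (w j z)))"
    and M: "\<And>i j. M $ i $ j = integral\<^sup>L lborel (\<lambda>z. complex_of_real (pz z) * (w i z * cnj (w j z)))"
  shows "ip x (M *v x) = complex_of_real (integral\<^sup>L lborel (\<lambda>z. pz z * (cmod (\<Sum>i\<in>UNIV. cnj (x$i) * w i z))\<^sup>2))"
    "integrable lborel (\<lambda>z. pz z * (cmod (\<Sum>i\<in>UNIV. cnj (x$i) * w i z))\<^sup>2)"
proof -
  define F where "F i j z = complex_of_real (pz z) * (w i z * cnj (w j z)) * (cnj (x$i) * x$j)" for i j z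
  have iF: "integrable lborel (F i j)" for i j unfolding F_def using int by auto
  have pt: "(\<Sum>i\<in>UNIV. \<Sum>j\<in>UNIV. F i j z) = complex_of_real (pz z * (cmod (\<Sum>i\<in>UNIV. cnj (x$i) * w i z))\<^sup>2)" for z
  proof -
    have "(\<Sum>i\<in>UNIV. \<Sum>j\<in>UNIV. F i j z) = complex_of_real (pz z) *
        ((\<Sum>i\<in>UNIV. cnj (x$i) * w i z) * cnj (\<Sum>j\<in>UNIV. cnj (x$j) * w j z))"
      unfolding F_def by (simp add: sum_distrib_left sum_distrib_right mult_ac)
    also have "\<dots> = complex_of_real (pz z * (cmod (\<Sum>i\<in>UNIV. cnj (x$i) * w i z))\<^sup>2)"
      by (simp only: complex_norm_square of_real_mult)
    finally show ?thesis .
  qed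
  have IF: "integral\<^sup>L lborel (F i j) = M $ i $ j * (cnj (x$i) * x$j)" for i j
    unfolding F_def M by (rule integral_mult_left_zero)
  have "ip x (M *v x) = (\<Sum>i\<in>UNIV. \<Sum>j\<in>UNIV. integral\<^sup>L lborel (F i j))"
    unfolding ip_def matrix_vector_mult_def IF
    by (simp add: sum_distrib_left mult_ac)
  also have "\<dots> = integral\<^sup>L lborel (\<lambda>z. \<Sum>i\<in>UNIV. \<Sum>j\<in>UNIV. F i j z)"
    using iF by (simp add: integral_sum)
  also have "\<dots> = integral\<^sup>L lborel (\<lambda>z. complex_of_real (pz z * (cmod (\<Sum>i\<in>UNIV. cnj (x$i) * w i z))\<^sup>2))"
    unfolding pt ..
  also have "\<dots> = complex_of_real (integral\<^sup>L lborel (\<lambda>z. pz z * (cmod (\<Sum>i\<in>UNIV. cnj (x$i) * w i z))\<^sup>2))"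
    by (rule integral_complex_of_real)
  finally show "ip x (M *v x) = complex_of_real (integral\<^sup>L lborel (\<lambda>z. pz z * (cmod (\<Sum>i\<in>UNIV. cnj (x$i) * w i z))\<^sup>2))" .
  have "integrable lborel (\<lambda>z. \<Sum>i\<in>UNIV. \<Sum>j\<in>UNIV. F i j z)" using iF by auto
  then have "integrable lborel (\<lambda>z. complex_of_real (pz z * (cmod (\<Sum>i\<in>UNIV. cnj (x$i) * w i z))\<^sup>2))"
    unfolding pt .
  from integrable_Re[OF this]
  show "integrable lborel (\<lambda>z. pz z * (cmod (\<Sum>i\<in>UNIV. cnj (x$i) * w i z))\<^sup>2)" by simp
qed

lemma inj_invertible:
  fixes M :: "'a::field^'n^'n"
  assumes "\<And>x. M *v x = 0 \<Longrightarrow> x = 0"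
  shows "invertible M"
proof -
  have "inj ((*v) M)"
  proof (rule injI)
    fix x y assume "M *v x = M *v y"
    then have "M *v (x - y) = 0" by (simp add: matrix_vector_mult_diff_distrib)
    then have "x - y = 0" using assms by blast
    then show "x = y" by simp
  qed
  then show ?thesis
    using invertible_det_nz det_nz_iff_inj_gen[of "(*v) M"] matrix_vector_mul_linear_gen
    by (metis matrix_of_matrix_vector_mul)
qed

lemma AE_zero_of_int0:
  fixes pz :: "'a::euclidean_space \<Rightarrow> real" and h :: "'a \<Rightarrow> complex"
  assumes i: "integrable lborel (\<lambda>z. pz z * (cmod (h z))\<^sup>2)" and p: "\<forall>z. pz z > 0"
    and z: "integral\<^sup>L lborel (\<lambda>z. pz z * (cmod (h z))\<^sup>2) = 0"
  shows "AE z in lborel. h z = 0"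
proof -
  have "AE z in lborel. pz z * (cmod (h z))\<^sup>2 = 0"
    using integral_nonneg_eq_0_iff_AE[OF i] z p by (simp add: less_imp_le)
  then show ?thesis
  proof (rule AE_mp, intro AE_I2 impI)
    fix z assume "pz z * (cmod (h z))\<^sup>2 = 0"
    moreover have "pz z > 0" using p by blast
    ultimately show "h z = 0" by simp
  qed
qed

context Model begin

lemma s2_ne: "sigma2_s ps \<noteq> 0"
proof
  assume "sigma2_s ps = 0"
  then have z: "integral\<^sup>L lborel (\<lambda>s. ps s * (cmod (id s))\<^sup>2) = 0" by (simp add: sigma2_s_def)
  have i: "integrable lborel (\<lambda>s. ps s * (cmod (id s))\<^sup>2)" using s_mom2 by simp
  have "AE s in lborel. id s = (0::complex)" by (rule AE_zero_of_int0[OF i ps_pos z])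
  then have "AE s in lborel. s = (0::complex)" by simp
  then have "AE s in lborel. complex_of_real (ps s) * (score_s ps s * cnj s) = 0" by eventually_elim simp
  then have "integral\<^sup>L lborel (\<lambda>s. complex_of_real (ps s) * (score_s ps s * cnj s)) = 0"
    by (rule integral_eq_zero_AE)
  then show False using E_psi_cs(2) by simp
qed

lemma ks_ne: "kappa_s ps \<noteq> 0"
proof
  assume "kappa_s ps = 0"
  then have "integral\<^sup>L lborel (\<lambda>s. ps s * (cmod (score_s ps s))\<^sup>2) = 0" by (simp add: kappa_s_def)
  from AE_zero_of_int0[OF s_fish ps_pos this]
  have "AE s in lborel. score_s ps s = 0" by simp
  then have "AE s in lborel. complex_of_real (ps s) * (score_s ps s * cnj s) = 0" by eventually_elim simp
  then have "integral\<^sup>L lborel (\<lambda>s. complex_of_real (ps s) * (score_s ps s * cnj s)) = 0"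
    by (rule integral_eq_zero_AE)
  then show False using E_psi_cs(2) by simp
qed

lemma K_inv: "invertible (kappa_z pz)"
proof (rule inj_invertible)
  fix x assume Kx: "kappa_z pz *v x = 0"
  define h where "h z = (\<Sum>i\<in>UNIV. cnj (x$i) * score_z pz z $ i)" for z
  note G = gram_qf[of pz "\<lambda>i z. score_z pz z $ i" "kappa_z pz" x, OF Z4(1)]
  have "ip x (kappa_z pz *v x) = 0" using Kx by simp
  then have "integral\<^sup>L lborel (\<lambda>z. pz z * (cmod (h z))\<^sup>2) = 0"
    using G(1) unfolding h_def by (simp add: kappa_z_def)
  from AE_zero_of_int0[OF _ pz_pos this] G(2)
  have ae: "AE z in lborel. h z = 0" unfolding h_def by (simp add: kappa_z_def)
  have "cnj (x$j) = 0" for j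
  proof -
    have "integral\<^sup>L lborel (\<lambda>z. complex_of_real (pz z) * (h z * cnj (z $ j))) =
        (\<Sum>i\<in>UNIV. cnj (x$i) * integral\<^sup>L lborel (\<lambda>z. complex_of_real (pz z) * (score_z pz z $ i * cnj (z $ j))))"
    proof -
      have "(\<lambda>z. complex_of_real (pz z) * (h z * cnj (z $ j))) =
          (\<lambda>z. \<Sum>i\<in>UNIV. cnj (x$i) * (complex_of_real (pz z) * (score_z pz z $ i * cnj (z $ j))))"
        unfolding h_def by (simp add: sum_distrib_left sum_distrib_right mult_ac)
      then show ?thesis using E_psiz_cz(1) by (simp add: integral_sum)
    qed
    also have "\<dots> = cnj (x$j)"
      unfolding E_psiz_cz(2) by (simp add: if_distrib if_distribR sum.delta cong: if_cong)
    finally have e: "integral\<^sup>L lborel (\<lambda>z. complex_of_real (pz z) * (h z * cnj (z $ j))) = cnj (x$j)" .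
    have "AE z in lborel. complex_of_real (pz z) * (h z * cnj (z $ j)) = 0" using ae by eventually_elim simp
    then have "integral\<^sup>L lborel (\<lambda>z. complex_of_real (pz z) * (h z * cnj (z $ j))) = 0"
      by (rule integral_eq_zero_AE)
    then show ?thesis using e by simp
  qed
  then show "x = 0" by (simp add: vec_eq_iff)
qed

lemma C_posdef: "posdef (cov_z pz)"
  unfolding posdef_def qf_ip
proof (intro conjI allI impI)
  show "hermitian (cov_z pz)"
  proof (rule hermitianI)
    fix i j
    have "cnj (cov_z pz $ j $ i) = integral\<^sup>L lborel (\<lambda>z. cnj (complex_of_real (pz z) * (z $ j * cnj (z $ i))))"
      unfolding cov_z_def by (simp only: vec_lambda_beta Bochner_Integration.integral_cnj)
    also have "\<dots> = cov_z pz $ i $ j" unfolding cov_z_def by (simp add: mult_ac)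
    finally show "cnj (cov_z pz $ j $ i) = cov_z pz $ i $ j" .
  qed
  fix x :: "complex^'n" assume x0: "x \<noteq> 0"
  define h where "h z = (\<Sum>i\<in>UNIV. cnj (x$i) * z $ i)" for z :: "complex^'n"
  note G = gram_qf[of pz "\<lambda>i z. z $ i" "cov_z pz" x, OF Z1(1)]
  have G1: "ip x (cov_z pz *v x) = complex_of_real (integral\<^sup>L lborel (\<lambda>z. pz z * (cmod (h z))\<^sup>2))"
    using G(1) unfolding h_def by (simp add: cov_z_def)
  have G2: "integrable lborel (\<lambda>z. pz z * (cmod (h z))\<^sup>2)"
    using G(2) unfolding h_def by (simp add: cov_z_def)
  have nn: "integral\<^sup>L lborel (\<lambda>z. pz z * (cmod (h z))\<^sup>2) \<ge> 0"
    by (intro integral_nonneg_AE AE_I2) (simp add: pz0)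
  show "Re (ip x (cov_z pz *v x)) > 0"
  proof (rule ccontr)
    assume "\<not> Re (ip x (cov_z pz *v x)) > 0"
    then have "integral\<^sup>L lborel (\<lambda>z. pz z * (cmod (h z))\<^sup>2) = 0" using nn G1 by simp
    from AE_zero_of_int0[OF G2 pz_pos this]
    have ae: "AE z in lborel. h z = 0" .
    have "(cov_z pz *v x) $ i = 0" for i
    proof -
      have "(cov_z pz *v x) $ i = integral\<^sup>L lborel (\<lambda>z. complex_of_real (pz z) * (z $ i * cnj (h z)))"
      proof -
        have "(\<lambda>z. complex_of_real (pz z) * (z $ i * cnj (h z))) =
            (\<lambda>z. \<Sum>j\<in>UNIV. (complex_of_real (pz z) * (z $ i * cnj (z $ j))) * x$j)"
          unfolding h_def by (simp add: sum_distrib_left sum_distrib_right mult_ac)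
        then show ?thesis using Z1(1)
          by (simp add: integral_sum matrix_vector_mult_def cov_z_def)
      qed
      also have "\<dots> = 0"
        by (rule integral_eq_zero_AE) (use ae in eventually_elim, simp)
      finally show ?thesis .
    qed
    then have "cov_z pz *v x = 0" by (simp add: vec_eq_iff)
    then have "x = 0" using inj_matrix_vector_mult[OF Cz_inv]
      by (metis injD matrix_vector_mult_0_right)
    then show False using x0 by simp
  qed
qed

end

theorem mainTheorem1:
  fixes ps :: "complex \<Rightarrow> real" and pz :: "complex^'n \<Rightarrow> real"
    and g :: "complex^'n" and N :: nat
  assumes N_pos: "N > 0"
    \<comment> \<open>densities: positive, normalized\<close>
    and ps_pos: "\<forall>s. ps s > 0" and pz_pos: "\<forall>z. pz z > 0"
    and ps_int: "integrable lborel ps" and ps_one: "integral\<^sup>L lborel ps = 1"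
    and pz_int: "integrable lborel pz" and pz_one: "integral\<^sup>L lborel pz = 1"
    \<comment> \<open>smoothness (continuously differentiable)\<close>
    and ps_diff: "\<forall>s. ps differentiable (at s)"
    and ps_C1: "continuous_on UNIV (cwirt (\<lambda>t. complex_of_real (ps t)))"
    and pz_diff: "\<forall>z. pz differentiable (at z)"
    and pz_C1: "continuous_on UNIV (vwirt (\<lambda>t. complex_of_real (pz t)))"
    \<comment> \<open>finite second moments and Fisher informations\<close>
    and s_mom2: "integrable lborel (\<lambda>s. ps s * (cmod s)\<^sup>2)"
    and s_fish: "integrable lborel (\<lambda>s. ps s * (cmod (score_s ps s))\<^sup>2)"
    and z_mom2: "integrable lborel (\<lambda>z. pz z * (norm z)\<^sup>2)"
    and z_fish: "integrable lborel (\<lambda>z. pz z * (norm (score_z pz z))\<^sup>2)"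
    \<comment> \<open>zero mean\<close>
    and s_mean: "integrable lborel (\<lambda>s. ps s *\<^sub>R s)" "integral\<^sup>L lborel (\<lambda>s. ps s *\<^sub>R s) = 0"
    and z_mean: "integrable lborel (\<lambda>z. pz z *\<^sub>R z)" "integral\<^sup>L lborel (\<lambda>z. pz z *\<^sub>R z) = 0"
    \<comment> \<open>circularity: E[s^2] = 0, E[z z^T] = 0\<close>
    and s_circ: "integral\<^sup>L lborel (\<lambda>s. ps s *\<^sub>R s\<^sup>2) = 0"
    and z_circ: "\<forall>i j. integral\<^sup>L lborel (\<lambda>z. pz z *\<^sub>R (z $ i * z $ j)) = 0"
    \<comment> \<open>vanishing boundary terms in integration by parts\<close>
    and s_ibp: "\<forall>f \<in> {\<lambda>t. 1, \<lambda>t. t, \<lambda>t. cnj t}.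
        integrable lborel (cwirt (\<lambda>t. f t * complex_of_real (ps t)))
      \<and> integral\<^sup>L lborel (cwirt (\<lambda>t. f t * complex_of_real (ps t))) = 0"
    and z_ibp: "\<forall>i j. \<forall>f \<in> {\<lambda>t. 1, \<lambda>t. t $ j, \<lambda>t. cnj (t $ j)}.
        integrable lborel (\<lambda>z. vwirt (\<lambda>t. f t * complex_of_real (pz t)) z $ i)
      \<and> integral\<^sup>L lborel (\<lambda>z. vwirt (\<lambda>t. f t * complex_of_real (pz t)) z $ i) = 0"
    \<comment> \<open>C_z nonsingular; Fisher information at the true parameter (h = 0, g) nonsingular\<close>
    and Cz_inv: "invertible (cov_z pz)"
    and J_inv: "invertible (fisherJ ps pz (param 0 g))"
  shows "crlb_h N ps pz (param 0 g)
           = (1 / real N) *\<^sub>R matrix_inv (kappa_s ps *\<^sub>R cov_z pz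
                 - (1 / sigma2_s ps) *\<^sub>R matrix_inv (kappa_z pz))
       \<and> (\<forall>om. eigenvalue_family (hpd_sqrt (cov_z pz) ** kappa_z pz ** hpd_sqrt (cov_z pz)) om
           \<longrightarrow> complex_of_real (1 / sigma2_s ps) * trace (cov_z pz ** crlb_h N ps pz (param 0 g))
               = (1 / of_nat N) * (\<Sum>j\<in>UNIV. om j
                     / (of_real (sigma2_s ps * kappa_s ps) * om j - 1)))"
proof -
  interpret Model ps pz
    by (unfold_locales; fact)
  define J where "J = fisherJ ps pz (param 0 g)"
  have JF: "J $ Inl a $ Inl b = fisherF ps pz (param 0 g) $ a $ b" for a b
    unfolding J_def fisherJ_def Let_def by simp
  have JP: "J $ Inl a $ Inr b = fisherP ps pz (param 0 g) $ a $ b" for a b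
    unfolding J_def fisherJ_def Let_def by simp
  note CB = crlb_block[of J "kappa_z pz" "sigma2_s ps" N "kappa_s ps" "cov_z pz",
      OF J_inv[folded J_def] K_inv s2_ne N_pos]
  have cb1: "(\<chi> i j. matrix_inv (real N *\<^sub>R J) $ Inl (Inl i) $ Inl (Inl j))
           = (1 / real N) *\<^sub>R matrix_inv (kappa_s ps *\<^sub>R cov_z pz - (1 / sigma2_s ps) *\<^sub>R matrix_inv (kappa_z pz))"
    and invS: "invertible (kappa_s ps *\<^sub>R cov_z pz - (1 / sigma2_s ps) *\<^sub>R matrix_inv (kappa_z pz))"
    using CB by (simp_all add: JF JP F_ll F_lr F_rl F_rr P_zero)
  have crlb: "crlb_h N ps pz (param 0 g) = (1 / real N) *\<^sub>R matrix_inv (kappa_s ps *\<^sub>R cov_z pz - (1 / sigma2_s ps) *\<^sub>R matrix_inv (kappa_z pz))"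
    unfolding crlb_h_def Let_def J_def[symmetric] cb1 ..
  have Rp: "posdef (hpd_sqrt (cov_z pz))" and RR: "hpd_sqrt (cov_z pz) ** hpd_sqrt (cov_z pz) = cov_z pz"
    using hpd_sqrt_props[OF C_posdef] by auto
  have invR: "invertible (hpd_sqrt (cov_z pz))" by (rule posdef_invertible[OF Rp])
  show ?thesis
  proof (intro conjI allI impI)
    show "crlb_h N ps pz (param 0 g) = (1 / real N) *\<^sub>R matrix_inv (kappa_s ps *\<^sub>R cov_z pz - (1 / sigma2_s ps) *\<^sub>R matrix_inv (kappa_z pz))"
      by (rule crlb)
    fix om assume "eigenvalue_family (hpd_sqrt (cov_z pz) ** kappa_z pz ** hpd_sqrt (cov_z pz)) om"
    then have cp: "char_poly_vec (hpd_sqrt (cov_z pz) ** kappa_z pz ** hpd_sqrt (cov_z pz)) = (\<Prod>j\<in>UNIV. [:- om j, 1:])"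
      unfolding eigenvalue_family_def .
    show "complex_of_real (1 / sigma2_s ps) * trace (cov_z pz ** crlb_h N ps pz (param 0 g))
               = (1 / of_nat N) * (\<Sum>j\<in>UNIV. om j / (of_real (sigma2_s ps * kappa_s ps) * om j - 1))"
      unfolding crlb by (rule final_trace[OF RR invR K_inv s2_ne ks_ne invS cp])
  qed
qed

end
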